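(* Assume $p_0\in(0,1)$, $p_j\in(0,1)$ and $\tau_j=\frac{p_0}{p_0+2(1-p_0)p_j}$ for $j=1,\dots,k$. Let $\Theta^0\in\mathbb R^{nd}$ be arbitrary, let $\xi^{(0)},\xi^{(1)},\dots$ be i.i.d. copies of $\xi$, and define iterates $\Theta^{t+1}=\Theta^t-\eta\,G(\Theta^t;\xi^{(t)})$. If $0<\eta\le\frac{1}{2\mathcal L}$, then for all $t\ge0$, $$\mathbb E\|\Theta^t-\hat\Theta\|^2\le(1-\eta\mu)^t\|\Theta^0-\hat\Theta\|^2+\frac{2\eta\,\sigma^2_{\hat\Theta}}{\mu}.$$
   Context: Clients $1,\dots,n$ are partitioned into nonempty disjoint clusters $\mathcal I_1,\dots,\mathcal I_k$; $d\ge1$. Each $f_i:\mathbb R^d\to\mathbb R$ is differentiable, $\mu$-strongly convex and $L$-smooth ($0<\mu\le L$). Fix $\gamma_i>0$ and $\alpha_j\in[0,1]$, not all $\alpha_j=0$. For $\Theta=(\theta_1,\dots,\theta_n)$ let $\Theta_j$ be the stacked vector of $\theta_i$, $i\in\mathcal I_j$; define $\bar\theta_j=\frac{\sum_{i\in\mathcal I_j}\gamma_i\theta_i}{\sum_{i\in\mathcal I_j}\gamma_i}$, $\bar\theta=\frac{\sum_{j}\sum_{i\in\mathcal I_j}\alpha_j\gamma_i\theta_i}{\sum_{j}\sum_{i\in\mathcal I_j}\alpha_j\gamma_i}$, $\psi_j(\Theta_j)=\frac12\sum_{i\in\mathcal I_j}\gamma_i\|\theta_i-\bar\theta_j\|^2$,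 $\varphi(\Theta)=\frac12\sum_{j}\alpha_j\sum_{i\in\mathcal I_j}\gamma_i\|\theta_i-\bar\theta\|^2$, $F_j(\Theta_j)=\sum_{i\in\mathcal I_j}f_i(\theta_i)$, and $F(\Theta)=\sum_jF_j(\Theta_j)+\sum_j(1-\alpha_j)\psi_j(\Theta_j)+\varphi(\Theta)$; $\hat\Theta$ is its unique minimizer. Gradient oracle: $\xi=(\xi_0,\dots,\xi_k)$ independent Bernoulli with $\mathbb P(\xi_j=1)=p_j$; $G(\Theta;\xi)=(G_1,\dots,G_n)$ with, for $i\in\mathcal I_j$: $G_i=\frac{\gamma_i\alpha_j}{p_0}(\theta_i-\bar\theta)+\frac{\gamma_i\tau_j(1-\alpha_j)}{p_0}(\theta_i-\bar\theta_j)$ if $\xi_0=1$; $G_i=\frac{\gamma_i(1-\tau_j)(1-\alpha_j)}{(1-p_0)p_j}(\theta_i-\bar\theta_j)$ if $\xi_0=0,\xi_j=1$; $G_i=\frac{1}{(1-p_0)(1-p_j)}\nabla f_i(\theta_i)$ if $\xi_0=\xi_j=0$. Define $\mathcal L=\max\big\{\frac{2}{p_0}\max_{j}\max_{i\in\mathcal I_j}\alpha_j\gamma_i,\ \max_{j}\frac{2(1-\alpha_j)\max_{i\in\mathcal I_j}\gamma_i}{p_0+2(1-p_0)p_j},\ \frac{L}{1-p_0}\max_{j}\frac{1}{1-p_j}\big\}$ and $\sigma^2_{\hat\Theta}=\frac{2}{p_0}\|\nabla\varphi(\hat\Theta)\|^2+\sum_{j=1}^k\frac{2(1-\alpha_j)^2}{p_0+2(1-p_0)p_j}\|\nabla\psi_j(\hat\Theta_j)\|^2+\frac{1}{1-p_0}\sum_{j=1}^k\frac{1}{1-p_j}\|\nabla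 F_j(\hat\Theta_j)\|^2$. *)

theory Defs
  imports "HOL-Analysis.Analysis" "HOL-Probability.Probability"
begin

text \<open>Clients are indexed by a finite type 'n, clusters by a finite type 'k
  (cluster of client i is c i), model parameters live in real^'d.
  A full parameter Theta is an element of real^'d^'n (i.e. R^{nd}).\<close>

definition gradient :: "('a::real_inner \<Rightarrow> real) \<Rightarrow> 'a \<Rightarrow> 'a" where
  "gradient g x = (THE D. GDERIV g x :> D)"

definition strongly_convex :: "real \<Rightarrow> ('a::real_inner \<Rightarrow> real) \<Rightarrow> bool" where
  "strongly_convex \<mu> g \<longleftrightarrow> convex_on UNIV (\<lambda>x. g x - \<mu> / 2 * (norm x)\<^sup>2)"

definition L_smooth :: "real \<Rightarrow> ('a::real_inner \<Rightarrow> real) \<Rightarrow> bool" where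
  "L_smooth L g \<longleftrightarrow>
     (\<forall>x y. norm (gradient g x - gradient g y) \<le> L * norm (x - y))"

definition cbar :: "('n::finite \<Rightarrow> 'k) \<Rightarrow> ('n \<Rightarrow> real) \<Rightarrow> 'k \<Rightarrow> real^'d^'n \<Rightarrow> real^'d" where
  "cbar c \<gamma> j \<Theta> = (\<Sum>i\<in>{i. c i = j}. \<gamma> i *\<^sub>R \<Theta>$i) /\<^sub>R (\<Sum>i\<in>{i. c i = j}. \<gamma> i)"

definition gbar :: "('n::finite \<Rightarrow> 'k) \<Rightarrow> ('n \<Rightarrow> real) \<Rightarrow> ('k \<Rightarrow> real) \<Rightarrow> real^'d^'n \<Rightarrow> real^'d" where
  "gbar c \<gamma> \<alpha> \<Theta> = (\<Sum>i\<in>UNIV. (\<alpha> (c i) * \<gamma> i) *\<^sub>R \<Theta>$i) /\<^sub>R (\<Sum>i\<in>UNIV. \<alpha> (c i) * \<gamma> i)"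

text \<open>psi_j, phi and F_j, viewed as functions of the full parameter Theta
  (they depend only on the relevant blocks).\<close>

definition psi :: "('n::finite \<Rightarrow> 'k) \<Rightarrow> ('n \<Rightarrow> real) \<Rightarrow> 'k \<Rightarrow> real^'d^'n \<Rightarrow> real" where
  "psi c \<gamma> j \<Theta> = 1/2 * (\<Sum>i\<in>{i. c i = j}. \<gamma> i * (norm (\<Theta>$i - cbar c \<gamma> j \<Theta>))\<^sup>2)"

definition phi :: "('n::finite \<Rightarrow> 'k) \<Rightarrow> ('n \<Rightarrow> real) \<Rightarrow> ('k \<Rightarrow> real) \<Rightarrow> real^'d^'n \<Rightarrow> real" where
  "phi c \<gamma> \<alpha> \<Theta> = 1/2 * (\<Sum>i\<in>UNIV. \<alpha> (c i) * \<gamma> i * (norm (\<Theta>$i - gbar c \<gamma> \<alpha> \<Theta>))\<^sup>2)"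

definition Fcl :: "('n::finite \<Rightarrow> 'k) \<Rightarrow> ('n \<Rightarrow> real^'d \<Rightarrow> real) \<Rightarrow> 'k \<Rightarrow> real^'d^'n \<Rightarrow> real" where
  "Fcl c f j \<Theta> = (\<Sum>i\<in>{i. c i = j}. f i (\<Theta>$i))"

definition Fobj :: "('n::finite \<Rightarrow> 'k::finite) \<Rightarrow> ('n \<Rightarrow> real^'d \<Rightarrow> real) \<Rightarrow> ('n \<Rightarrow> real)
    \<Rightarrow> ('k \<Rightarrow> real) \<Rightarrow> real^'d^'n \<Rightarrow> real" where
  "Fobj c f \<gamma> \<alpha> \<Theta> = (\<Sum>j\<in>UNIV. Fcl c f j \<Theta>) + (\<Sum>j\<in>UNIV. (1 - \<alpha> j) * psi c \<gamma> j \<Theta>)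
     + phi c \<gamma> \<alpha> \<Theta>"

text \<open>The stochastic gradient oracle; xi = (xi_0, (xi_j)_j).\<close>

definition Gor :: "('n::finite \<Rightarrow> 'k) \<Rightarrow> ('n \<Rightarrow> real^'d \<Rightarrow> real) \<Rightarrow> ('n \<Rightarrow> real)
    \<Rightarrow> ('k \<Rightarrow> real) \<Rightarrow> real \<Rightarrow> ('k \<Rightarrow> real) \<Rightarrow> ('k \<Rightarrow> real)
    \<Rightarrow> real^'d^'n \<Rightarrow> bool \<times> ('k \<Rightarrow> bool) \<Rightarrow> real^'d^'n" where
  "Gor c f \<gamma> \<alpha> p0 p \<tau> \<Theta> \<xi> = (\<chi> i. let j = c i in
     if fst \<xi> then
       (\<gamma> i * \<alpha> j / p0) *\<^sub>R (\<Theta>$i - gbar c \<gamma> \<alpha> \<Theta>)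
       + (\<gamma> i * \<tau> j * (1 - \<alpha> j) / p0) *\<^sub>R (\<Theta>$i - cbar c \<gamma> j \<Theta>)
     else if snd \<xi> j then
       (\<gamma> i * (1 - \<tau> j) * (1 - \<alpha> j) / ((1 - p0) * p j)) *\<^sub>R (\<Theta>$i - cbar c \<gamma> j \<Theta>)
     else
       (1 / ((1 - p0) * (1 - p j))) *\<^sub>R gradient (f i) (\<Theta>$i))"

definition xi_pmf :: "real \<Rightarrow> ('k::finite \<Rightarrow> real) \<Rightarrow> (bool \<times> ('k \<Rightarrow> bool)) pmf" where
  "xi_pmf p0 p = pair_pmf (bernoulli_pmf p0) (Pi_pmf UNIV False (\<lambda>j. bernoulli_pmf (p j)))"

primrec iter :: "(real^'d^'n \<Rightarrow> bool \<times> ('k \<Rightarrow> bool) \<Rightarrow> real^'d^'n) \<Rightarrow> real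
    \<Rightarrow> real^'d^'n \<Rightarrow> (nat \<Rightarrow> bool \<times> ('k \<Rightarrow> bool)) \<Rightarrow> nat \<Rightarrow> real^'d^'n" where
  "iter G \<eta> \<Theta>0 xis 0 = \<Theta>0"
| "iter G \<eta> \<Theta>0 xis (Suc t) = iter G \<eta> \<Theta>0 xis t - \<eta> *\<^sub>R G (iter G \<eta> \<Theta>0 xis t) (xis t)"

definition calL :: "('n::finite \<Rightarrow> 'k::finite) \<Rightarrow> ('n \<Rightarrow> real) \<Rightarrow> ('k \<Rightarrow> real) \<Rightarrow> real
    \<Rightarrow> ('k \<Rightarrow> real) \<Rightarrow> real \<Rightarrow> real" where
  "calL c \<gamma> \<alpha> p0 p L = max (max
      (2 / p0 * Max (range (\<lambda>i. \<alpha> (c i) * \<gamma> i)))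
      (Max (range (\<lambda>j. 2 * (1 - \<alpha> j) * Max (\<gamma> ` {i. c i = j}) / (p0 + 2 * (1 - p0) * p j)))))
      (L / (1 - p0) * Max (range (\<lambda>j. 1 / (1 - p j))))"

definition sigma2 :: "('n::finite \<Rightarrow> 'k::finite) \<Rightarrow> ('n \<Rightarrow> real^'d \<Rightarrow> real) \<Rightarrow> ('n \<Rightarrow> real)
    \<Rightarrow> ('k \<Rightarrow> real) \<Rightarrow> real \<Rightarrow> ('k \<Rightarrow> real) \<Rightarrow> real^'d^'n \<Rightarrow> real" where
  "sigma2 c f \<gamma> \<alpha> p0 p \<Theta> =
     2 / p0 * (norm (gradient (phi c \<gamma> \<alpha>) \<Theta>))\<^sup>2
     + (\<Sum>j\<in>UNIV. 2 * (1 - \<alpha> j)\<^sup>2 / (p0 + 2 * (1 - p0) * p j) * (norm (gradient (psi c \<gamma> j) \<Theta>))\<^sup>2)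
     + 1 / (1 - p0) * (\<Sum>j\<in>UNIV. 1 / (1 - p j) * (norm (gradient (Fcl c f j) \<Theta>))\<^sup>2)"

end

theory Submission
  imports Defs
begin

lemma gradient_eqI:
  fixes g :: "'a::real_inner \<Rightarrow> real"
  assumes "(g has_derivative (\<lambda>h. h \<bullet> D)) (at x)"
  shows "gradient g x = D"
  unfolding gradient_def
proof (rule the_equality)
  show "GDERIV g x :> D" using assms by (simp add: gderiv_def)
next
  fix D' assume "GDERIV g x :> D'"
  hence "(g has_derivative (\<lambda>h. h \<bullet> D')) (at x)" by (simp add: gderiv_def)
  from has_derivative_unique[OF assms this]
  have "(\<lambda>h. h \<bullet> D) = (\<lambda>h. h \<bullet> D')" .
  hence "(D' - D) \<bullet> D = (D' - D) \<bullet> D'" by metis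
  hence "(D' - D) \<bullet> (D' - D) = 0" by (simp add: inner_diff_right)
  thus "D' = D" by simp
qed

lemma gradient_works:
  fixes g :: "'a::euclidean_space \<Rightarrow> real"
  assumes "g differentiable (at x)"
  shows "(g has_derivative (\<lambda>h. h \<bullet> gradient g x)) (at x)"
proof -
  obtain g' where g': "(g has_derivative g') (at x)" using assms differentiable_def by blast
  have lin: "linear g'" using has_derivative_linear[OF g'] .
  define D where "D = (\<Sum>b\<in>Basis. g' b *\<^sub>R b)"
  have eq: "g' h = h \<bullet> D" for h
  proof -
    have "g' h = g' (\<Sum>b\<in>Basis. (h \<bullet> b) *\<^sub>R b)" by (simp add: euclidean_representation)
    also have "\<dots> = (\<Sum>b\<in>Basis. (h \<bullet> b) * g' b)"
      by (simp add: linear_sum[OF lin] linear_scale[OF lin])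
    also have "\<dots> = h \<bullet> D" by (simp add: D_def inner_sum_right mult.commute)
    finally show ?thesis .
  qed
  have gD: "(g has_derivative (\<lambda>h. h \<bullet> D)) (at x)"
    using g' by (rule has_derivative_eq_rhs) (simp add: eq fun_eq_iff)
  have "gradient g x = D" using gradient_eqI[OF gD] .
  with gD show ?thesis by simp
qed

lemma convex_tangent:
  fixes h :: "'a::real_inner \<Rightarrow> real"
  assumes cv: "convex_on UNIV h" and d: "(h has_derivative (\<lambda>v. v \<bullet> D)) (at x)"
  shows "h y \<ge> h x + (y - x) \<bullet> D"
proof -
  define \<phi> where "\<phi> t = h (x + t *\<^sub>R (y - x))" for t :: real
  have cphi: "convex_on UNIV \<phi>"
  proof (rule convex_onI)
    fix t a b :: real assume t: "t > 0" "t < 1"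
    have "x + ((1 - t) * a + t * b) *\<^sub>R (y - x) = (1 - t) *\<^sub>R (x + a *\<^sub>R (y - x)) + t *\<^sub>R (x + b *\<^sub>R (y - x))"
      by (simp add: algebra_simps)
    hence "\<phi> ((1 - t) *\<^sub>R a + t *\<^sub>R b) = h ((1 - t) *\<^sub>R (x + a *\<^sub>R (y - x)) + t *\<^sub>R (x + b *\<^sub>R (y - x)))"
      by (simp add: \<phi>_def)
    also have "\<dots> \<le> (1 - t) * \<phi> a + t * \<phi> b"
      unfolding \<phi>_def using t by (intro convex_onD[OF cv]) auto
    finally show "\<phi> ((1 - t) *\<^sub>R a + t *\<^sub>R b) \<le> (1 - t) * \<phi> a + t * \<phi> b" .
  qed simp
  have "((\<lambda>t. x + t *\<^sub>R (y - x)) has_derivative (\<lambda>t. t *\<^sub>R (y - x))) (at 0)"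
    by (auto intro!: derivative_eq_intros)
  moreover have "(h has_derivative (\<lambda>v. v \<bullet> D)) (at (x + 0 *\<^sub>R (y - x)))" using d by simp
  ultimately have "(\<phi> has_derivative (\<lambda>t. (t *\<^sub>R (y - x)) \<bullet> D)) (at 0)"
    unfolding \<phi>_def by (rule has_derivative_compose[of _ _ _ _ h])
  hence "(\<phi> has_field_derivative ((y - x) \<bullet> D)) (at 0 within UNIV)"
    unfolding has_field_derivative_def
    by (rule has_derivative_eq_rhs) (auto simp: fun_eq_iff)
  from convex_on_imp_above_tangent[OF cphi _ _ _ this, of 1]
  have "\<phi> 1 - \<phi> 0 \<ge> (y - x) \<bullet> D" by simp
  thus ?thesis by (simp add: \<phi>_def)
qed

lemma descent:
  fixes f :: "'a::euclidean_space \<Rightarrow> real"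
  assumes diff: "\<forall>z. f differentiable (at z)" and sm: "L_smooth L f"
  shows "f y \<le> f x + (y - x) \<bullet> gradient f x + L / 2 * (norm (y - x))\<^sup>2"
proof -
  define d where "d = y - x"
  define \<psi> where "\<psi> t = f (x + t *\<^sub>R d) - t * (d \<bullet> gradient f x) - L / 2 * t\<^sup>2 * (norm d)\<^sup>2" for t :: real
  have "\<psi> 1 \<le> \<psi> 0"
  proof (rule DERIV_nonpos_imp_nonincreasing[of 0 1 \<psi>])
    fix t :: real assume t: "0 \<le> t" "t \<le> 1"
    have gf: "(f has_derivative (\<lambda>h. h \<bullet> gradient f (x + t *\<^sub>R d))) (at (x + t *\<^sub>R d))"
      using gradient_works diff by blast
    have "((\<lambda>t. x + t *\<^sub>R d) has_derivative (\<lambda>t. t *\<^sub>R d)) (at t)"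
      by (auto intro!: derivative_eq_intros)
    from has_derivative_compose[OF this gf]
    have "((\<lambda>t. f (x + t *\<^sub>R d)) has_derivative (\<lambda>s. (s *\<^sub>R d) \<bullet> gradient f (x + t *\<^sub>R d))) (at t)" .
    hence "((\<lambda>t. f (x + t *\<^sub>R d)) has_field_derivative (d \<bullet> gradient f (x + t *\<^sub>R d))) (at t)"
      unfolding has_field_derivative_def
      by (rule has_derivative_eq_rhs) (auto simp: fun_eq_iff)
    hence D: "(\<psi> has_field_derivative (d \<bullet> gradient f (x + t *\<^sub>R d) - d \<bullet> gradient f x - L * t * (norm d)\<^sup>2)) (at t)"
      unfolding \<psi>_def by (auto intro!: derivative_eq_intros)
    have "d \<bullet> (gradient f (x + t *\<^sub>R d) - gradient f x) \<le> norm d * norm (gradient f (x + t *\<^sub>R d) - gradient f x)"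
      by (rule norm_cauchy_schwarz)
    also have "\<dots> \<le> norm d * (L * norm (x + t *\<^sub>R d - x))"
      using sm unfolding L_smooth_def by (intro mult_left_mono) (blast, simp)
    also have "\<dots> = L * t * (norm d)\<^sup>2" using t by (simp add: power2_eq_square)
    finally have "d \<bullet> gradient f (x + t *\<^sub>R d) - d \<bullet> gradient f x - L * t * (norm d)\<^sup>2 \<le> 0"
      by (simp add: inner_diff_right)
    with D show "\<exists>y. (\<psi> has_real_derivative y) (at t) \<and> y \<le> 0" by blast
  qed simp
  thus ?thesis by (simp add: \<psi>_def d_def inner_commute)
qed

lemma sc_first_order:
  fixes f :: "'a::euclidean_space \<Rightarrow> real"
  assumes diff: "\<forall>z. f differentiable (at z)" and sc: "strongly_convex \<mu> f"
  shows "f y \<ge> f x + (y - x) \<bullet> gradient f x + \<mu> / 2 * (norm (y - x))\<^sup>2"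
proof -
  have cv: "convex_on UNIV (\<lambda>z. f z - \<mu> / 2 * (z \<bullet> z))"
    using sc unfolding strongly_convex_def by (simp add: power2_norm_eq_inner)
  have gf: "(f has_derivative (\<lambda>h. h \<bullet> gradient f x)) (at x)"
    using gradient_works diff by blast
  have "((\<lambda>z. f z - \<mu> / 2 * (z \<bullet> z)) has_derivative (\<lambda>v. v \<bullet> (gradient f x - \<mu> *\<^sub>R x))) (at x)"
    by (rule has_derivative_eq_rhs, (rule derivative_intros gf)+)
       (auto simp: fun_eq_iff inner_diff_right inner_commute algebra_simps)
  from convex_tangent[OF cv this, of y]
  have "f y - \<mu> / 2 * (y \<bullet> y) \<ge> f x - \<mu> / 2 * (x \<bullet> x) + (y - x) \<bullet> (gradient f x - \<mu> *\<^sub>R x)" .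
  moreover have nn: "(norm (y - x))\<^sup>2 = y \<bullet> y - 2 * (x \<bullet> y) + x \<bullet> x"
    by (simp add: power2_norm_eq_inner inner_diff_left inner_diff_right inner_commute)
  have "\<mu> / 2 * (norm (y - x))\<^sup>2 = \<mu> / 2 * (y \<bullet> y) - \<mu> * (x \<bullet> y) + \<mu> / 2 * (x \<bullet> x)"
    unfolding nn by (simp add: algebra_simps)
  moreover have "(y - x) \<bullet> (gradient f x - \<mu> *\<^sub>R x) = (y - x) \<bullet> gradient f x - \<mu> * (x \<bullet> y) + \<mu> * (x \<bullet> x)"
    by (simp add: inner_diff_right inner_diff_left inner_commute algebra_simps)
  ultimately show ?thesis by linarith
qed

lemma coco:
  fixes f :: "'a::euclidean_space \<Rightarrow> real"
  assumes diff: "\<forall>z. f differentiable (at z)" and sc: "strongly_convex \<mu> f"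
    and sm: "L_smooth L f" and mu: "0 \<le> \<mu>" and L: "0 < L"
  shows "(gradient f x - gradient f y) \<bullet> (x - y) \<ge>
           \<mu> / 2 * (norm (x - y))\<^sup>2 + (norm (gradient f x - gradient f y))\<^sup>2 / (2 * L)"
proof -
  define gx where "gx = gradient f x"
  define gy where "gy = gradient f y"
  define e where "e = gy - gx"
  define z where "z = y - (1 / L) *\<^sub>R e"
  have A: "f x \<ge> f y + (x - y) \<bullet> gy + \<mu> / 2 * (norm (x - y))\<^sup>2"
    using sc_first_order[OF diff sc] gy_def by blast
  have B1: "f z \<ge> f x + (z - x) \<bullet> gx"
    using sc_first_order[OF diff sc, of x z] mu gx_def
    by (smt (verit) mult_nonneg_nonneg zero_le_power2 zero_le_divide_iff)
  have B2: "f z \<le> f y + (z - y) \<bullet> gy + L / 2 * (norm (z - y))\<^sup>2"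
    using descent[OF diff sm] gy_def by blast
  have zy: "z - y = - (1 / L) *\<^sub>R e" by (simp add: z_def)
  have n1: "(norm (z - y))\<^sup>2 = (1 / L)\<^sup>2 * (e \<bullet> e)"
  proof -
    have "(norm (z - y))\<^sup>2 = (1 / L)\<^sup>2 * (norm e)\<^sup>2" using L by (simp add: zy power_mult_distrib power_divide)
    thus ?thesis by (simp add: power2_norm_eq_inner)
  qed
  have i1: "(z - x) \<bullet> gx = (y - x) \<bullet> gx - (1 / L) * (e \<bullet> gx)"
    by (simp add: z_def inner_diff_left)
  have i2: "(z - y) \<bullet> gy = - (1 / L) * (e \<bullet> gy)" by (simp add: zy)
  have ee: "e \<bullet> gy - e \<bullet> gx = e \<bullet> e" by (simp add: e_def inner_diff_right inner_diff_left)
  have "L / 2 * ((1 / L)\<^sup>2 * (e \<bullet> e)) = (e \<bullet> e) / (2 * L)" using L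
    by (simp add: power2_eq_square field_simps)
  moreover have "(1 / L) * (e \<bullet> gy) - (1 / L) * (e \<bullet> gx) = (1 / L) * (e \<bullet> e)"
    by (simp add: ee[symmetric] right_diff_distrib)
  moreover have "(1 / L) * (e \<bullet> e) = (e \<bullet> e) / (2 * L) + (e \<bullet> e) / (2 * L)"
    using L by (simp add: field_simps)
  ultimately have C: "f y \<ge> f x + (y - x) \<bullet> gx + (e \<bullet> e) / (2 * L)"
    using B1 B2 unfolding n1 i1 i2 by linarith
  have i3: "(gx - gy) \<bullet> (x - y) = - ((x - y) \<bullet> gy) - ((y - x) \<bullet> gx)"
    by (simp add: inner_diff_left inner_diff_right inner_commute)
  have n2: "(norm (gx - gy))\<^sup>2 = e \<bullet> e"
    by (simp add: e_def power2_norm_eq_inner inner_diff_left inner_diff_right inner_commute)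
  show ?thesis using A C unfolding gx_def[symmetric] gy_def[symmetric] n2 i3 by linarith
qed

lemma norm_add_sq_le:
  fixes x y :: "'a::real_inner"
  shows "(norm (x + y))\<^sup>2 \<le> 2 * (norm x)\<^sup>2 + 2 * (norm y)\<^sup>2"
proof -
  have "(norm (x + y))\<^sup>2 + (norm (x - y))\<^sup>2 = 2 * (norm x)\<^sup>2 + 2 * (norm y)\<^sup>2"
    by (simp add: power2_norm_eq_inner inner_add_left inner_add_right inner_diff_left inner_diff_right inner_commute)
  thus ?thesis by (smt (verit) zero_le_power2)
qed

lemma norm_sq_scale: "(norm (s *\<^sub>R (x::'a::real_normed_vector)))\<^sup>2 = s\<^sup>2 * (norm x)\<^sup>2"
  by (simp add: power_mult_distrib)

lemma tau_identity:
  fixes p0 P :: real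
  assumes "0 < p0" "p0 < 1" "0 < P" "P < 1"
  defines "t \<equiv> p0 / (p0 + 2 * (1 - p0) * P)"
  shows "2 * t\<^sup>2 / p0 + (1 - t)\<^sup>2 / ((1 - p0) * P) = 2 / (p0 + 2 * (1 - p0) * P)"
proof -
  define q where "q = (1 - p0) * P"
  define D where "D = p0 + 2 * q"
  have qp: "q > 0" using assms by (simp add: q_def)
  have Dp: "D > 0" using qp assms by (simp add: D_def)
  have tD: "t = p0 / D" by (simp add: t_def D_def q_def)
  have 1: "1 - t = 2 * q / D" using Dp by (simp add: tD D_def field_simps)
  have "2 * t\<^sup>2 / p0 = 2 * p0 / D\<^sup>2" using assms(1) Dp by (simp add: tD power2_eq_square field_simps)
  moreover have "(1 - t)\<^sup>2 / q = 4 * q / D\<^sup>2" using qp Dp by (simp add: 1 power2_eq_square field_simps)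
  moreover have "2 * p0 / D\<^sup>2 + 4 * q / D\<^sup>2 = 2 / D"
  proof -
    have "2 * p0 / D\<^sup>2 + 4 * q / D\<^sup>2 = (2 * D) / D\<^sup>2" by (simp add: D_def add_divide_distrib[symmetric])
    also have "\<dots> = 2 / D" using Dp by (simp add: power2_eq_square)
    finally show ?thesis .
  qed
  ultimately have "2 * t\<^sup>2 / p0 + (1 - t)\<^sup>2 / q = 2 / D" by simp
  thus ?thesis unfolding q_def D_def by simp
qed

lemma Q_bound:
  fixes x y z :: "'a::real_inner" and g al t p0 P :: real
  assumes p: "0 < p0" "p0 < 1" "0 < P" "P < 1"
    and t: "t = p0 / (p0 + 2 * (1 - p0) * P)"
  shows "p0 * (norm ((g * al / p0) *\<^sub>R x + (g * t * (1 - al) / p0) *\<^sub>R y))\<^sup>2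
       + (1 - p0) * P * (norm ((g * (1 - t) * (1 - al) / ((1 - p0) * P)) *\<^sub>R y))\<^sup>2
       + (1 - p0) * (1 - P) * (norm ((1 / ((1 - p0) * (1 - P))) *\<^sub>R z))\<^sup>2
     \<le> 2 / p0 * (g * al)\<^sup>2 * (norm x)\<^sup>2 + 2 / (p0 + 2 * (1 - p0) * P) * (g * (1 - al))\<^sup>2 * (norm y)\<^sup>2
       + 1 / ((1 - p0) * (1 - P)) * (norm z)\<^sup>2"
proof -
  have q: "(1 - p0) * P > 0" "(1 - p0) * (1 - P) > 0" using p by auto
  have "(norm ((g * al / p0) *\<^sub>R x + (g * t * (1 - al) / p0) *\<^sub>R y))\<^sup>2
     \<le> 2 * ((g * al / p0)\<^sup>2 * (norm x)\<^sup>2) + 2 * ((g * t * (1 - al) / p0)\<^sup>2 * (norm y)\<^sup>2)"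
    using norm_add_sq_le[of "(g * al / p0) *\<^sub>R x" "(g * t * (1 - al) / p0) *\<^sub>R y"]
    by (simp only: norm_sq_scale)
  hence 1: "p0 * (norm ((g * al / p0) *\<^sub>R x + (g * t * (1 - al) / p0) *\<^sub>R y))\<^sup>2
     \<le> 2 / p0 * (g * al)\<^sup>2 * (norm x)\<^sup>2 + 2 * t\<^sup>2 / p0 * (g * (1 - al))\<^sup>2 * (norm y)\<^sup>2"
  proof -
    have a: "p0 * (2 * ((g * al / p0)\<^sup>2 * (norm x)\<^sup>2)) = 2 / p0 * (g * al)\<^sup>2 * (norm x)\<^sup>2"
      using p(1) by (simp add: power2_eq_square)
    have b: "p0 * (2 * ((g * t * (1 - al) / p0)\<^sup>2 * (norm y)\<^sup>2)) = 2 * t\<^sup>2 / p0 * (g * (1 - al))\<^sup>2 * (norm y)\<^sup>2"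
      using p(1) by (simp add: power2_eq_square)
    show ?thesis using mult_left_mono[OF \<open>_ \<le> _\<close>, of p0] p(1) unfolding distrib_left a b by simp
  qed
  have 2: "(1 - p0) * P * (norm ((g * (1 - t) * (1 - al) / ((1 - p0) * P)) *\<^sub>R y))\<^sup>2
      = (1 - t)\<^sup>2 / ((1 - p0) * P) * (g * (1 - al))\<^sup>2 * (norm y)\<^sup>2"
  proof -
    have e: "q * (x / q)\<^sup>2 = x\<^sup>2 / q" if "q \<noteq> 0" for q x :: real
      using that by (simp add: power2_eq_square)
    have "(g * (1 - t) * (1 - al))\<^sup>2 = (1 - t)\<^sup>2 * (g * (1 - al))\<^sup>2" by (simp add: power_mult_distrib)
    moreover have "(1 - p0) * P * (g * (1 - t) * (1 - al) / ((1 - p0) * P))\<^sup>2 =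
      (g * (1 - t) * (1 - al))\<^sup>2 / ((1 - p0) * P)" using e[of "(1 - p0) * P" "g * (1 - t) * (1 - al)"] q by (metis less_irrefl)
    ultimately have K: "(1 - p0) * P * (g * (1 - t) * (1 - al) / ((1 - p0) * P))\<^sup>2 =
       (1 - t)\<^sup>2 / ((1 - p0) * P) * (g * (1 - al))\<^sup>2" by simp
    show ?thesis unfolding norm_sq_scale mult.assoc[symmetric, of "(1 - p0) * P"] K ..
  qed
  have 3: "(1 - p0) * (1 - P) * (norm ((1 / ((1 - p0) * (1 - P))) *\<^sub>R z))\<^sup>2
      = 1 / ((1 - p0) * (1 - P)) * (norm z)\<^sup>2"
  proof -
    have K: "(1 - p0) * (1 - P) * (1 / ((1 - p0) * (1 - P)))\<^sup>2 = 1 / ((1 - p0) * (1 - P))"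
      using q(2) by (simp add: power2_eq_square)
    show ?thesis unfolding norm_sq_scale mult.assoc[symmetric, of "(1 - p0) * (1 - P)"] K ..
  qed
  have 4: "2 * t\<^sup>2 / p0 * (g * (1 - al))\<^sup>2 * (norm y)\<^sup>2 + (1 - t)\<^sup>2 / ((1 - p0) * P) * (g * (1 - al))\<^sup>2 * (norm y)\<^sup>2
     = 2 / (p0 + 2 * (1 - p0) * P) * (g * (1 - al))\<^sup>2 * (norm y)\<^sup>2"
  proof -
    have TI: "2 * t\<^sup>2 / p0 + (1 - t)\<^sup>2 / ((1 - p0) * P) = 2 / (p0 + 2 * (1 - p0) * P)"
      unfolding t by (rule tau_identity[OF p])
    have "(2 * t\<^sup>2 / p0 + (1 - t)\<^sup>2 / ((1 - p0) * P)) * ((g * (1 - al))\<^sup>2 * (norm y)\<^sup>2)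
        = 2 / (p0 + 2 * (1 - p0) * P) * ((g * (1 - al))\<^sup>2 * (norm y)\<^sup>2)" unfolding TI ..
    thus ?thesis by (simp only: distrib_right mult.assoc)
  qed
  show ?thesis using 1 2 3 4 by linarith
qed

lemma comp_bound:
  fixes r U V G U' V' G' a b cc a' b' cc' :: "'a::real_inner" and g al t p0 P \<eta> :: real
  assumes p: "0 < p0" "p0 < 1" "0 < P" "P < 1"
    and t: "t = p0 / (p0 + 2 * (1 - p0) * P)"
    and zero: "(g * al) *\<^sub>R U' + (g * (1 - al)) *\<^sub>R V' + G' = 0"
    and a: "a = (g * al / p0) *\<^sub>R U + (g * t * (1 - al) / p0) *\<^sub>R V"
    and a': "a' = (g * al / p0) *\<^sub>R U' + (g * t * (1 - al) / p0) *\<^sub>R V'"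
    and b: "b = (g * (1 - t) * (1 - al) / ((1 - p0) * P)) *\<^sub>R V"
    and b': "b' = (g * (1 - t) * (1 - al) / ((1 - p0) * P)) *\<^sub>R V'"
    and cc: "cc = (1 / ((1 - p0) * (1 - P))) *\<^sub>R G"
    and cc': "cc' = (1 / ((1 - p0) * (1 - P))) *\<^sub>R G'"
  shows "p0 * (norm (r - \<eta> *\<^sub>R a))\<^sup>2 + (1 - p0) * P * (norm (r - \<eta> *\<^sub>R b))\<^sup>2
           + (1 - p0) * (1 - P) * (norm (r - \<eta> *\<^sub>R cc))\<^sup>2
     \<le> (norm r)\<^sup>2 - 2 * \<eta> * ((g * al) * ((U - U') \<bullet> r) + (g * (1 - al)) * ((V - V') \<bullet> r) + (G - G') \<bullet> r)
        + 2 * \<eta>\<^sup>2 * (2 / p0 * (g * al)\<^sup>2 * (norm (U - U'))\<^sup>2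
              + 2 / (p0 + 2 * (1 - p0) * P) * (g * (1 - al))\<^sup>2 * (norm (V - V'))\<^sup>2
              + 1 / ((1 - p0) * (1 - P)) * (norm (G - G'))\<^sup>2)
        + 2 * \<eta>\<^sup>2 * (2 / p0 * (g * al)\<^sup>2 * (norm U')\<^sup>2
              + 2 / (p0 + 2 * (1 - p0) * P) * (g * (1 - al))\<^sup>2 * (norm V')\<^sup>2
              + 1 / ((1 - p0) * (1 - P)) * (norm G')\<^sup>2)"
proof -
  have q: "(1 - p0) * P > 0" "(1 - p0) * (1 - P) > 0" using p by auto
  have ex: "(norm (r - \<eta> *\<^sub>R x))\<^sup>2 = (norm r)\<^sup>2 - 2 * \<eta> * (r \<bullet> x) + \<eta>\<^sup>2 * (norm x)\<^sup>2" for x :: 'a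
    unfolding power2_norm_eq_inner by (simp add: inner_diff_left inner_diff_right inner_commute power2_eq_square algebra_simps)
  define m where "m = p0 *\<^sub>R a + ((1 - p0) * P) *\<^sub>R b + ((1 - p0) * (1 - P)) *\<^sub>R cc"
  have c1: "p0 * (g * al / p0) = g * al" using p by simp
  have c2: "p0 * (g * t * (1 - al) / p0) + (1 - p0) * P * (g * (1 - t) * (1 - al) / ((1 - p0) * P)) = g * (1 - al)"
    using p q by (simp add: field_simps)
  have c3: "(1 - p0) * (1 - P) * (1 / ((1 - p0) * (1 - P))) = 1" using q p by simp
  have "m = (g * al) *\<^sub>R U + (p0 * (g * t * (1 - al) / p0) + (1 - p0) * P * (g * (1 - t) * (1 - al) / ((1 - p0) * P))) *\<^sub>R V + G"
    unfolding m_def a b cc using p q by (simp add: scaleR_add_right scaleR_add_left c1 c3 del: c2)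
  hence m1: "m = (g * al) *\<^sub>R U + (g * (1 - al)) *\<^sub>R V + G" unfolding c2 .
  have "m = m - ((g * al) *\<^sub>R U' + (g * (1 - al)) *\<^sub>R V' + G')" using zero by simp
  also have "\<dots> = (g * al) *\<^sub>R (U - U') + (g * (1 - al)) *\<^sub>R (V - V') + (G - G')"
    unfolding m1 by (simp add: algebra_simps)
  finally have m: "m = (g * al) *\<^sub>R (U - U') + (g * (1 - al)) *\<^sub>R (V - V') + (G - G')" .
  have rm: "r \<bullet> m = (g * al) * ((U - U') \<bullet> r) + (g * (1 - al)) * ((V - V') \<bullet> r) + (G - G') \<bullet> r"
    unfolding m by (simp add: inner_add_right inner_commute)
  have "p0 * (norm (r - \<eta> *\<^sub>R a))\<^sup>2 + (1 - p0) * P * (norm (r - \<eta> *\<^sub>R b))\<^sup>2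
           + (1 - p0) * (1 - P) * (norm (r - \<eta> *\<^sub>R cc))\<^sup>2
     = (p0 + (1 - p0) * P + (1 - p0) * (1 - P)) * (norm r)\<^sup>2 - 2 * \<eta> * (r \<bullet> m)
       + \<eta>\<^sup>2 * (p0 * (norm a)\<^sup>2 + (1 - p0) * P * (norm b)\<^sup>2 + (1 - p0) * (1 - P) * (norm cc)\<^sup>2)"
    unfolding ex m_def by (simp add: inner_add_right algebra_simps)
  also have "p0 + (1 - p0) * P + (1 - p0) * (1 - P) = 1" by (simp add: algebra_simps)
  finally have E: "p0 * (norm (r - \<eta> *\<^sub>R a))\<^sup>2 + (1 - p0) * P * (norm (r - \<eta> *\<^sub>R b))\<^sup>2
           + (1 - p0) * (1 - P) * (norm (r - \<eta> *\<^sub>R cc))\<^sup>2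
     = (norm r)\<^sup>2 - 2 * \<eta> * (r \<bullet> m)
       + \<eta>\<^sup>2 * (p0 * (norm a)\<^sup>2 + (1 - p0) * P * (norm b)\<^sup>2 + (1 - p0) * (1 - P) * (norm cc)\<^sup>2)" by simp
  have sp: "(norm x)\<^sup>2 \<le> 2 * (norm (x - y))\<^sup>2 + 2 * (norm y)\<^sup>2" for x y :: 'a
    using norm_add_sq_le[of "x - y" y] by simp
  have da: "a - a' = (g * al / p0) *\<^sub>R (U - U') + (g * t * (1 - al) / p0) *\<^sub>R (V - V')"
    unfolding a a' by (simp add: algebra_simps scaleR_diff_right)
  have db: "b - b' = (g * (1 - t) * (1 - al) / ((1 - p0) * P)) *\<^sub>R (V - V')"
    unfolding b b' by (simp add: scaleR_diff_right)
  have dc: "cc - cc' = (1 / ((1 - p0) * (1 - P))) *\<^sub>R (G - G')"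
    unfolding cc cc' by (simp add: scaleR_diff_right)
  have "p0 * (norm a)\<^sup>2 + (1 - p0) * P * (norm b)\<^sup>2 + (1 - p0) * (1 - P) * (norm cc)\<^sup>2
     \<le> 2 * (p0 * (norm (a - a'))\<^sup>2 + (1 - p0) * P * (norm (b - b'))\<^sup>2 + (1 - p0) * (1 - P) * (norm (cc - cc'))\<^sup>2)
       + 2 * (p0 * (norm a')\<^sup>2 + (1 - p0) * P * (norm b')\<^sup>2 + (1 - p0) * (1 - P) * (norm cc')\<^sup>2)"
    using mult_left_mono[OF sp[of a a'], of p0] mult_left_mono[OF sp[of b b'], of "(1 - p0) * P"]
      mult_left_mono[OF sp[of cc cc'], of "(1 - p0) * (1 - P)"] p q
    by (simp add: algebra_simps)
  also have "\<dots> \<le> 2 * (2 / p0 * (g * al)\<^sup>2 * (norm (U - U'))\<^sup>2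
              + 2 / (p0 + 2 * (1 - p0) * P) * (g * (1 - al))\<^sup>2 * (norm (V - V'))\<^sup>2
              + 1 / ((1 - p0) * (1 - P)) * (norm (G - G'))\<^sup>2)
        + 2 * (2 / p0 * (g * al)\<^sup>2 * (norm U')\<^sup>2
              + 2 / (p0 + 2 * (1 - p0) * P) * (g * (1 - al))\<^sup>2 * (norm V')\<^sup>2
              + 1 / ((1 - p0) * (1 - P)) * (norm G')\<^sup>2)"
    unfolding da db dc unfolding a' b' cc'
    by (intro add_mono mult_left_mono Q_bound[OF p t]) auto
  finally have "\<eta>\<^sup>2 * (p0 * (norm a)\<^sup>2 + (1 - p0) * P * (norm b)\<^sup>2 + (1 - p0) * (1 - P) * (norm cc)\<^sup>2) \<le> \<eta>\<^sup>2 * (\<dots>)"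
    by (rule mult_left_mono) simp
  thus ?thesis unfolding E rm by (simp add: algebra_simps)
qed

lemma comp_bound2:
  fixes r dU dV dG mU mV :: "'a::real_inner" and w b a cw cb \<eta> \<mu> L Ec S :: real
  assumes E: "Ec \<le> (norm r)\<^sup>2 - 2 * \<eta> * (w * (dU \<bullet> r) + b * (dV \<bullet> r) + dG \<bullet> r)
        + 2 * \<eta>\<^sup>2 * (cw * w\<^sup>2 * (norm dU)\<^sup>2 + cb * b\<^sup>2 * (norm dV)\<^sup>2 + a * (norm dG)\<^sup>2) + 2 * \<eta>\<^sup>2 * S"
    and dU: "dU = r - mU" and dV: "dV = r - mV"
    and pos: "0 \<le> w" "0 \<le> b" "0 \<le> \<eta>" "0 < L"
    and cwb: "\<eta> * cw * w \<le> 1" "\<eta> * cb * b \<le> 1" "2 * \<eta> * a * L \<le> 1"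
    and cc: "dG \<bullet> r \<ge> \<mu> / 2 * (norm r)\<^sup>2 + (norm dG)\<^sup>2 / (2 * L)"
  shows "Ec \<le> (1 - \<eta> * \<mu>) * (norm r)\<^sup>2 - 2 * \<eta> * (w * (dU \<bullet> mU) + b * (dV \<bullet> mV)) + 2 * \<eta>\<^sup>2 * S"
proof -
  have rU: "dU \<bullet> r = (norm dU)\<^sup>2 + dU \<bullet> mU"
    by (simp add: dU power2_norm_eq_inner inner_diff_right)
  have rV: "dV \<bullet> r = (norm dV)\<^sup>2 + dV \<bullet> mV"
    by (simp add: dV power2_norm_eq_inner inner_diff_right)
  have tU: "2 * \<eta>\<^sup>2 * (cw * w\<^sup>2 * (norm dU)\<^sup>2) \<le> 2 * \<eta> * (w * (norm dU)\<^sup>2)"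
  proof -
    have "2 * \<eta>\<^sup>2 * (cw * w\<^sup>2 * (norm dU)\<^sup>2) = (\<eta> * cw * w) * (2 * \<eta> * w * (norm dU)\<^sup>2)"
      by (simp add: power2_eq_square)
    also have "\<dots> \<le> 1 * (2 * \<eta> * w * (norm dU)\<^sup>2)"
      using pos cwb by (intro mult_right_mono) auto
    finally show ?thesis by simp
  qed
  have tV: "2 * \<eta>\<^sup>2 * (cb * b\<^sup>2 * (norm dV)\<^sup>2) \<le> 2 * \<eta> * (b * (norm dV)\<^sup>2)"
  proof -
    have "2 * \<eta>\<^sup>2 * (cb * b\<^sup>2 * (norm dV)\<^sup>2) = (\<eta> * cb * b) * (2 * \<eta> * b * (norm dV)\<^sup>2)"
      by (simp add: power2_eq_square)
    also have "\<dots> \<le> 1 * (2 * \<eta> * b * (norm dV)\<^sup>2)"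
      using pos cwb by (intro mult_right_mono) auto
    finally show ?thesis by simp
  qed
  have tG: "2 * \<eta>\<^sup>2 * (a * (norm dG)\<^sup>2) \<le> \<eta> * ((norm dG)\<^sup>2 / L)"
  proof -
    have "2 * \<eta>\<^sup>2 * (a * (norm dG)\<^sup>2) = (2 * \<eta> * a * L) * (\<eta> * ((norm dG)\<^sup>2 / L))"
      using pos by (simp add: power2_eq_square)
    also have "\<dots> \<le> 1 * (\<eta> * ((norm dG)\<^sup>2 / L))"
      using pos cwb by (intro mult_right_mono) auto
    finally show ?thesis by simp
  qed
  have cG: "2 * \<eta> * (dG \<bullet> r) \<ge> \<eta> * \<mu> * (norm r)\<^sup>2 + \<eta> * ((norm dG)\<^sup>2 / L)"
  proof -
    have "2 * \<eta> * (dG \<bullet> r) \<ge> 2 * \<eta> * (\<mu> / 2 * (norm r)\<^sup>2 + (norm dG)\<^sup>2 / (2 * L))"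
      using cc pos by (intro mult_left_mono) auto
    moreover have "2 * \<eta> * (\<mu> / 2 * (norm r)\<^sup>2 + (norm dG)\<^sup>2 / (2 * L)) = \<eta> * \<mu> * (norm r)\<^sup>2 + \<eta> * ((norm dG)\<^sup>2 / L)"
      using pos by (simp add: field_simps)
    ultimately show ?thesis by simp
  qed
  have ex: "2 * \<eta> * (w * (dU \<bullet> r) + b * (dV \<bullet> r) + dG \<bullet> r)
     = 2 * \<eta> * (w * (norm dU)\<^sup>2) + 2 * \<eta> * (b * (norm dV)\<^sup>2) + 2 * \<eta> * (dG \<bullet> r)
       + 2 * \<eta> * (w * (dU \<bullet> mU) + b * (dV \<bullet> mV))"
    unfolding rU rV by (simp add: algebra_simps)
  have ex2: "2 * \<eta>\<^sup>2 * (cw * w\<^sup>2 * (norm dU)\<^sup>2 + cb * b\<^sup>2 * (norm dV)\<^sup>2 + a * (norm dG)\<^sup>2)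
     = 2 * \<eta>\<^sup>2 * (cw * w\<^sup>2 * (norm dU)\<^sup>2) + 2 * \<eta>\<^sup>2 * (cb * b\<^sup>2 * (norm dV)\<^sup>2) + 2 * \<eta>\<^sup>2 * (a * (norm dG)\<^sup>2)"
    by (simp add: algebra_simps)
  show ?thesis using E unfolding ex ex2 using tU tV tG cG by (simp add: algebra_simps)
qed

lemma expect_finite_sum:
  fixes h :: "'a \<Rightarrow> real"
  assumes "finite (set_pmf M)"
  shows "measure_pmf.expectation M h = (\<Sum>a\<in>set_pmf M. pmf M a * h a)"
  by (subst integral_measure_pmf[OF assms]) auto

lemma expect_pair_finite:
  fixes h :: "'a \<times> 'b \<Rightarrow> real"
  assumes A: "finite (set_pmf A)" and B: "finite (set_pmf B)"
  shows "measure_pmf.expectation (pair_pmf A B) h =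
         measure_pmf.expectation B (\<lambda>b. measure_pmf.expectation A (\<lambda>a. h (a, b)))"
proof -
  have fp: "finite (set_pmf (pair_pmf A B))" using A B by (simp add: set_pair_pmf)
  have "measure_pmf.expectation (pair_pmf A B) h = (\<Sum>x\<in>set_pmf A \<times> set_pmf B. pmf (pair_pmf A B) x * h x)"
    using expect_finite_sum[OF fp] by (simp add: set_pair_pmf)
  also have "\<dots> = (\<Sum>a\<in>set_pmf A. \<Sum>b\<in>set_pmf B. pmf A a * pmf B b * h (a, b))"
    by (auto simp: sum.cartesian_product pmf_pair intro!: sum.cong)
  also have "\<dots> = (\<Sum>b\<in>set_pmf B. \<Sum>a\<in>set_pmf A. pmf A a * pmf B b * h (a, b))"
    by (rule sum.swap)
  also have "\<dots> = (\<Sum>b\<in>set_pmf B. pmf B b * (\<Sum>a\<in>set_pmf A. pmf A a * h (a, b)))"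
    by (simp add: sum_distrib_left mult.commute mult.left_commute)
  also have "\<dots> = measure_pmf.expectation B (\<lambda>b. measure_pmf.expectation A (\<lambda>a. h (a, b)))"
    using expect_finite_sum[OF A] expect_finite_sum[OF B] by simp
  finally show ?thesis .
qed

lemma iter_cong:
  assumes "\<forall>s<t. xis s = xis' s"
  shows "iter G \<eta> \<Theta>0 xis t = iter G \<eta> \<Theta>0 xis' t"
  using assms by (induction t) auto

lemma fin_Pi:
  assumes "finite (set_pmf Q)"
  shows "finite (set_pmf (Pi_pmf {..<t::nat} dflt (\<lambda>_. Q)))"
proof -
  have "set_pmf (Pi_pmf {..<t} dflt (\<lambda>_. Q)) \<subseteq> PiE_dflt {..<t} dflt (set_pmf \<circ> (\<lambda>_. Q))"
    using set_Pi_pmf_subset'[of "{..<t}" dflt "\<lambda>_. Q"] by simp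
  moreover have "finite (PiE_dflt {..<t} dflt (set_pmf \<circ> (\<lambda>_. Q)))"
    using assms by (intro finite_PiE_dflt) auto
  ultimately show ?thesis by (rule finite_subset)
qed

lemma iter_bound:
  fixes Gf :: "real^'d^'n \<Rightarrow> bool \<times> ('k \<Rightarrow> bool) \<Rightarrow> real^'d^'n"
  assumes fin: "finite (set_pmf Q)"
    and step: "\<And>\<Theta>. measure_pmf.expectation Q (\<lambda>y. (norm (\<Theta> - \<eta> *\<^sub>R Gf \<Theta> y - \<Theta>h))\<^sup>2)
                 \<le> \<rho> * (norm (\<Theta> - \<Theta>h))\<^sup>2 + cst"
    and rho: "0 \<le> \<rho>" and K: "\<rho> * K + cst \<le> K" and K0: "0 \<le> K"
  shows "measure_pmf.expectation (Pi_pmf {..<t} dflt (\<lambda>_. Q))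
           (\<lambda>xis. (norm (iter Gf \<eta> \<Theta>0 xis t - \<Theta>h))\<^sup>2) \<le> \<rho> ^ t * (norm (\<Theta>0 - \<Theta>h))\<^sup>2 + K"
proof (induction t)
  case 0
  have "measure_pmf.expectation (Pi_pmf {..<0::nat} dflt (\<lambda>_. Q))
           (\<lambda>xis. (norm (iter Gf \<eta> \<Theta>0 xis 0 - \<Theta>h))\<^sup>2) = (norm (\<Theta>0 - \<Theta>h))\<^sup>2" by simp
  moreover have "K \<ge> 0" by (rule K0)
  ultimately show ?case by simp
next
  case (Suc t)
  define P where "P = Pi_pmf {..<t} dflt (\<lambda>_. Q)"
  define X where "X xis = iter Gf \<eta> \<Theta>0 xis t" for xis
  have fP: "finite (set_pmf P)" unfolding P_def by (rule fin_Pi[OF fin])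
  have ins: "{..<Suc t} = insert t {..<t}" by auto
  have eq: "Pi_pmf {..<Suc t} dflt (\<lambda>_. Q) = map_pmf (\<lambda>(y, f). f(t := y)) (pair_pmf Q P)"
    unfolding ins P_def by (rule Pi_pmf_insert) auto
  have Xupd: "iter Gf \<eta> \<Theta>0 (f(t := y)) t = X f" for f y
    unfolding X_def by (rule iter_cong) auto
  have "measure_pmf.expectation (Pi_pmf {..<Suc t} dflt (\<lambda>_. Q))
           (\<lambda>xis. (norm (iter Gf \<eta> \<Theta>0 xis (Suc t) - \<Theta>h))\<^sup>2)
      = measure_pmf.expectation (pair_pmf Q P) (\<lambda>x. (norm (X (snd x) - \<eta> *\<^sub>R Gf (X (snd x)) (fst x) - \<Theta>h))\<^sup>2)"
    unfolding eq by (simp add: case_prod_beta Xupd)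
  also have "\<dots> = measure_pmf.expectation P (\<lambda>f. measure_pmf.expectation Q (\<lambda>y. (norm (X f - \<eta> *\<^sub>R Gf (X f) y - \<Theta>h))\<^sup>2))"
    by (subst expect_pair_finite[OF fin fP]) simp
  also have "\<dots> \<le> measure_pmf.expectation P (\<lambda>f. \<rho> * (norm (X f - \<Theta>h))\<^sup>2 + cst)"
    by (intro integral_mono integrable_measure_pmf_finite fP step)
  also have "\<dots> = \<rho> * measure_pmf.expectation P (\<lambda>f. (norm (X f - \<Theta>h))\<^sup>2) + cst"
    by (simp add: integrable_measure_pmf_finite[OF fP])
  also have "\<dots> \<le> \<rho> * (\<rho> ^ t * (norm (\<Theta>0 - \<Theta>h))\<^sup>2 + K) + cst"
    using Suc.IH rho unfolding P_def X_def by (intro add_right_mono mult_left_mono) auto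
  also have "\<dots> \<le> \<rho> ^ Suc t * (norm (\<Theta>0 - \<Theta>h))\<^sup>2 + K"
    using K by (simp add: algebra_simps)
  finally show ?case .
qed

lemma expect_bernoulli:
  fixes f :: "bool \<Rightarrow> real"
  assumes "0 \<le> q" "q \<le> 1"
  shows "measure_pmf.expectation (bernoulli_pmf q) f = q * f True + (1 - q) * f False"
proof -
  have "measure_pmf.expectation (bernoulli_pmf q) f = (\<Sum>a\<in>UNIV. pmf (bernoulli_pmf q) a *\<^sub>R f a)"
    by (rule integral_measure_pmf) auto
  also have "\<dots> = q * f True + (1 - q) * f False"
    using assms by (simp add: UNIV_bool)
  finally show ?thesis .
qed

lemma xi_expect:
  fixes h :: "bool \<Rightarrow> bool \<Rightarrow> real" and p :: "'k::finite \<Rightarrow> real"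
  assumes "0 \<le> p0" "p0 \<le> 1" "0 \<le> p j" "p j \<le> 1"
  shows "measure_pmf.expectation (xi_pmf p0 p) (\<lambda>\<xi>. h (fst \<xi>) (snd \<xi> j)) =
    p0 * (p j * h True True + (1 - p j) * h True False)
    + (1 - p0) * (p j * h False True + (1 - p j) * h False False)"
proof -
  have m: "map_pmf (\<lambda>\<xi>. (fst \<xi>, snd \<xi> j)) (xi_pmf p0 p) = pair_pmf (bernoulli_pmf p0) (bernoulli_pmf (p j))"
  proof -
    have "map_pmf (\<lambda>\<xi>. (fst \<xi>, snd \<xi> j)) (xi_pmf p0 p) =
      map_pmf (\<lambda>(a, b). (id a, (\<lambda>f. f j) b)) (pair_pmf (bernoulli_pmf p0) (Pi_pmf UNIV False (\<lambda>j. bernoulli_pmf (p j))))"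
      unfolding xi_pmf_def by (intro map_pmf_cong) auto
    also have "\<dots> = pair_pmf (map_pmf id (bernoulli_pmf p0)) (map_pmf (\<lambda>f. f j) (Pi_pmf UNIV False (\<lambda>j. bernoulli_pmf (p j))))"
      by (rule map_pair)
    also have "\<dots> = pair_pmf (bernoulli_pmf p0) (bernoulli_pmf (p j))"
      by (simp add: Pi_pmf_component)
    finally show ?thesis .
  qed
  have "measure_pmf.expectation (xi_pmf p0 p) (\<lambda>\<xi>. h (fst \<xi>) (snd \<xi> j)) =
        measure_pmf.expectation (map_pmf (\<lambda>\<xi>. (fst \<xi>, snd \<xi> j)) (xi_pmf p0 p)) (\<lambda>x. h (fst x) (snd x))"
    by simp
  also have "\<dots> = measure_pmf.expectation (bernoulli_pmf (p j))
       (\<lambda>b. measure_pmf.expectation (bernoulli_pmf p0) (\<lambda>a. h a b))"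
    unfolding m by (subst expect_pair_finite) auto
  also have "\<dots> = p0 * (p j * h True True + (1 - p j) * h True False)
    + (1 - p0) * (p j * h False True + (1 - p j) * h False False)"
    using assms by (simp add: expect_bernoulli algebra_simps)
  finally show ?thesis .
qed

definition gphi :: "('n::finite \<Rightarrow> 'k) \<Rightarrow> ('n \<Rightarrow> real) \<Rightarrow> ('k \<Rightarrow> real) \<Rightarrow> real^'d^'n \<Rightarrow> real^'d^'n" where
  "gphi c \<gamma> \<alpha> \<Theta> = (\<chi> i. (\<alpha> (c i) * \<gamma> i) *\<^sub>R (\<Theta>$i - gbar c \<gamma> \<alpha> \<Theta>))"

definition gpsi :: "('n::finite \<Rightarrow> 'k) \<Rightarrow> ('n \<Rightarrow> real) \<Rightarrow> 'k \<Rightarrow> real^'d^'n \<Rightarrow> real^'d^'n" where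
  "gpsi c \<gamma> j \<Theta> = (\<chi> i. if c i = j then \<gamma> i *\<^sub>R (\<Theta>$i - cbar c \<gamma> j \<Theta>) else 0)"

definition gFc :: "('n::finite \<Rightarrow> 'k) \<Rightarrow> ('n \<Rightarrow> real^'d \<Rightarrow> real) \<Rightarrow> 'k \<Rightarrow> real^'d^'n \<Rightarrow> real^'d^'n" where
  "gFc c f j \<Theta> = (\<chi> i. if c i = j then gradient (f i) (\<Theta>$i) else 0)"

lemma has_derivative_vec_nth' [derivative_intros]:
  "((\<lambda>x. x $ i) has_derivative (\<lambda>h. h $ i)) F"
  by (rule bounded_linear_imp_has_derivative) (rule bounded_linear_vec_nth)

lemma has_derivative_gbar:
  "(gbar c \<gamma> \<alpha> has_derivative gbar c \<gamma> \<alpha>) F"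
  unfolding gbar_def[abs_def]
  by (auto intro!: derivative_eq_intros)

lemma has_derivative_cbar:
  "(cbar c \<gamma> j has_derivative cbar c \<gamma> j) F"
  unfolding cbar_def[abs_def]
  by (auto intro!: derivative_eq_intros)

lemma sum_gbar_zero:
  assumes "(\<Sum>i\<in>UNIV. \<alpha> (c i) * \<gamma> i) \<noteq> 0"
  shows "(\<Sum>i\<in>UNIV. (\<alpha> (c i) * \<gamma> i) *\<^sub>R (\<Theta>$i - gbar c \<gamma> \<alpha> \<Theta>)) = (0::real^'d)"
  using assms by (simp add: gbar_def scaleR_diff_right sum_subtractf scaleR_sum_left[symmetric] sum_distrib_right[symmetric])

lemma sum_cbar_zero:
  assumes "(\<Sum>i\<in>{i. c i = j}. \<gamma> i) \<noteq> 0"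
  shows "(\<Sum>i\<in>{i. c i = j}. \<gamma> i *\<^sub>R (\<Theta>$i - cbar c \<gamma> j \<Theta>)) = (0::real^'d)"
  using assms by (simp add: cbar_def scaleR_diff_right sum_subtractf scaleR_sum_left[symmetric] sum_distrib_right[symmetric])

lemma phi_inner: "phi c \<gamma> \<alpha> \<Theta> = 1/2 * (\<Sum>i\<in>UNIV. \<alpha> (c i) * \<gamma> i *
   ((\<Theta>$i - gbar c \<gamma> \<alpha> \<Theta>) \<bullet> (\<Theta>$i - gbar c \<gamma> \<alpha> \<Theta>)))"
  by (simp add: phi_def power2_norm_eq_inner)

lemma psi_inner: "psi c \<gamma> j \<Theta> = 1/2 * (\<Sum>i\<in>{i. c i = j}. \<gamma> i *
   ((\<Theta>$i - cbar c \<gamma> j \<Theta>) \<bullet> (\<Theta>$i - cbar c \<gamma> j \<Theta>)))"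
  by (simp add: psi_def power2_norm_eq_inner)

lemma has_derivative_phi:
  fixes c :: "'n::finite \<Rightarrow> 'k"
  assumes W: "(\<Sum>i\<in>UNIV. \<alpha> (c i) * \<gamma> i) \<noteq> 0"
  shows "(phi c \<gamma> \<alpha> has_derivative (\<lambda>h. h \<bullet> gphi c \<gamma> \<alpha> \<Theta>)) (at (\<Theta>::real^'d^'n))"
proof -
  let ?U = "\<lambda>i. \<Theta>$i - gbar c \<gamma> \<alpha> \<Theta>"
  have "((\<lambda>\<Theta>. 1/2 * (\<Sum>i\<in>UNIV. \<alpha> (c i) * \<gamma> i *
     ((\<Theta>$i - gbar c \<gamma> \<alpha> \<Theta>) \<bullet> (\<Theta>$i - gbar c \<gamma> \<alpha> \<Theta>)))) has_derivative
     (\<lambda>h. 1/2 * (\<Sum>i\<in>UNIV. \<alpha> (c i) * \<gamma> i *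
     (?U i \<bullet> (h$i - gbar c \<gamma> \<alpha> h) + (h$i - gbar c \<gamma> \<alpha> h) \<bullet> ?U i)))) (at \<Theta>)"
    by (auto intro!: derivative_eq_intros has_derivative_gbar)
  moreover have "(\<lambda>h. 1/2 * (\<Sum>i\<in>UNIV. \<alpha> (c i) * \<gamma> i *
     (?U i \<bullet> (h$i - gbar c \<gamma> \<alpha> h) + (h$i - gbar c \<gamma> \<alpha> h) \<bullet> ?U i))) = (\<lambda>h. h \<bullet> gphi c \<gamma> \<alpha> \<Theta>)"
  proof
    fix h :: "real^'d^'n"
    have "1/2 * (\<Sum>i\<in>UNIV. \<alpha> (c i) * \<gamma> i *
     (?U i \<bullet> (h$i - gbar c \<gamma> \<alpha> h) + (h$i - gbar c \<gamma> \<alpha> h) \<bullet> ?U i))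
      = (\<Sum>i\<in>UNIV. \<alpha> (c i) * \<gamma> i * (h$i \<bullet> ?U i)) - (\<Sum>i\<in>UNIV. gbar c \<gamma> \<alpha> h \<bullet> ((\<alpha> (c i) * \<gamma> i) *\<^sub>R ?U i))"
      by (simp add: inner_commute inner_diff_left sum_subtractf[symmetric] sum_distrib_left algebra_simps)
    also have "(\<Sum>i\<in>UNIV. gbar c \<gamma> \<alpha> h \<bullet> ((\<alpha> (c i) * \<gamma> i) *\<^sub>R ?U i)) = 0"
    proof -
      have "gbar c \<gamma> \<alpha> h \<bullet> (\<Sum>i\<in>UNIV. (\<alpha> (c i) * \<gamma> i) *\<^sub>R ?U i) = 0"
        using sum_gbar_zero[where \<Theta>=\<Theta> and \<alpha>=\<alpha> and c=c and \<gamma>=\<gamma>, OF W] by simp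
      thus ?thesis by (simp only: inner_sum_right)
    qed
    also have "(\<Sum>i\<in>UNIV. \<alpha> (c i) * \<gamma> i * (h$i \<bullet> ?U i)) = h \<bullet> gphi c \<gamma> \<alpha> \<Theta>"
      unfolding gphi_def inner_vec_def[of h] by simp
    finally show "1/2 * (\<Sum>i\<in>UNIV. \<alpha> (c i) * \<gamma> i *
     (?U i \<bullet> (h$i - gbar c \<gamma> \<alpha> h) + (h$i - gbar c \<gamma> \<alpha> h) \<bullet> ?U i)) = h \<bullet> gphi c \<gamma> \<alpha> \<Theta>" by simp
  qed
  ultimately show ?thesis unfolding phi_inner[abs_def] by simp
qed

lemma has_derivative_psi:
  fixes c :: "'n::finite \<Rightarrow> 'k"
  assumes W: "(\<Sum>i\<in>{i. c i = j}. \<gamma> i) \<noteq> 0"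
  shows "(psi c \<gamma> j has_derivative (\<lambda>h. h \<bullet> gpsi c \<gamma> j \<Theta>)) (at (\<Theta>::real^'d^'n))"
proof -
  let ?U = "\<lambda>i. \<Theta>$i - cbar c \<gamma> j \<Theta>"
  have "((\<lambda>\<Theta>. 1/2 * (\<Sum>i\<in>{i. c i = j}. \<gamma> i *
     ((\<Theta>$i - cbar c \<gamma> j \<Theta>) \<bullet> (\<Theta>$i - cbar c \<gamma> j \<Theta>)))) has_derivative
     (\<lambda>h. 1/2 * (\<Sum>i\<in>{i. c i = j}. \<gamma> i *
     (?U i \<bullet> (h$i - cbar c \<gamma> j h) + (h$i - cbar c \<gamma> j h) \<bullet> ?U i)))) (at \<Theta>)"
    by (auto intro!: derivative_eq_intros has_derivative_cbar)
  moreover have "(\<lambda>h. 1/2 * (\<Sum>i\<in>{i. c i = j}. \<gamma> i *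
     (?U i \<bullet> (h$i - cbar c \<gamma> j h) + (h$i - cbar c \<gamma> j h) \<bullet> ?U i))) = (\<lambda>h. h \<bullet> gpsi c \<gamma> j \<Theta>)"
  proof
    fix h :: "real^'d^'n"
    have "1/2 * (\<Sum>i\<in>{i. c i = j}. \<gamma> i *
     (?U i \<bullet> (h$i - cbar c \<gamma> j h) + (h$i - cbar c \<gamma> j h) \<bullet> ?U i))
      = (\<Sum>i\<in>{i. c i = j}. \<gamma> i * (h$i \<bullet> ?U i)) - (\<Sum>i\<in>{i. c i = j}. cbar c \<gamma> j h \<bullet> (\<gamma> i *\<^sub>R ?U i))"
      by (simp add: inner_commute inner_diff_left sum_subtractf[symmetric] sum_distrib_left algebra_simps)
    also have "(\<Sum>i\<in>{i. c i = j}. cbar c \<gamma> j h \<bullet> (\<gamma> i *\<^sub>R ?U i)) = 0"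
    proof -
      have "cbar c \<gamma> j h \<bullet> (\<Sum>i\<in>{i. c i = j}. \<gamma> i *\<^sub>R ?U i) = 0"
        using sum_cbar_zero[where \<Theta>=\<Theta> and j=j and c=c and \<gamma>=\<gamma>, OF W] by simp
      thus ?thesis by (simp only: inner_sum_right)
    qed
    also have "(\<Sum>i\<in>{i. c i = j}. \<gamma> i * (h$i \<bullet> ?U i)) = h \<bullet> gpsi c \<gamma> j \<Theta>"
      unfolding gpsi_def inner_vec_def[of h] by (simp add: if_distrib sum.inter_filter[symmetric] cong: if_cong)
    finally show "1/2 * (\<Sum>i\<in>{i. c i = j}. \<gamma> i *
     (?U i \<bullet> (h$i - cbar c \<gamma> j h) + (h$i - cbar c \<gamma> j h) \<bullet> ?U i)) = h \<bullet> gpsi c \<gamma> j \<Theta>" by simp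
  qed
  ultimately show ?thesis unfolding psi_inner[abs_def] by simp
qed

lemma has_derivative_Fcl:
  fixes c :: "'n::finite \<Rightarrow> 'k" and f :: "'n \<Rightarrow> real^'d \<Rightarrow> real"
  assumes diff: "\<forall>i x. f i differentiable (at x)"
  shows "(Fcl c f j has_derivative (\<lambda>h. h \<bullet> gFc c f j \<Theta>)) (at \<Theta>)"
proof -
  have gi: "(f i has_derivative (\<lambda>h. h \<bullet> gradient (f i) (\<Theta>$i))) (at (\<Theta>$i))" for i
    using gradient_works diff by blast
  have "((\<lambda>\<Theta>. \<Sum>i\<in>{i. c i = j}. f i (\<Theta>$i)) has_derivative
        (\<lambda>h. \<Sum>i\<in>{i. c i = j}. h$i \<bullet> gradient (f i) (\<Theta>$i))) (at \<Theta>)"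
    by (intro has_derivative_sum has_derivative_compose[OF has_derivative_vec_nth' gi])
  moreover have "(\<lambda>h. \<Sum>i\<in>{i. c i = j}. h$i \<bullet> gradient (f i) (\<Theta>$i)) = (\<lambda>h. h \<bullet> gFc c f j \<Theta>)"
  proof
    fix h :: "real^'d^'n"
    show "(\<Sum>i\<in>{i. c i = j}. h$i \<bullet> gradient (f i) (\<Theta>$i)) = h \<bullet> gFc c f j \<Theta>"
      unfolding gFc_def inner_vec_def[of h] by (simp add: if_distrib sum.inter_filter[symmetric] cong: if_cong)
  qed
  ultimately show ?thesis unfolding Fcl_def[abs_def] by simp
qed

definition gtot where
  "gtot c f \<gamma> \<alpha> \<Theta> = (\<Sum>j\<in>UNIV. gFc c f j \<Theta>) + (\<Sum>j\<in>UNIV. (1 - \<alpha> j) *\<^sub>R gpsi c \<gamma> j \<Theta>) + gphi c \<gamma> \<alpha> \<Theta>"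

lemma gtot_component:
  fixes c :: "'n::finite \<Rightarrow> 'k::finite"
  shows "gtot c f \<gamma> \<alpha> \<Theta> $ i = gradient (f i) (\<Theta>$i) + ((1 - \<alpha> (c i)) * \<gamma> i) *\<^sub>R (\<Theta>$i - cbar c \<gamma> (c i) \<Theta>)
     + (\<alpha> (c i) * \<gamma> i) *\<^sub>R (\<Theta>$i - gbar c \<gamma> \<alpha> \<Theta>)"
proof -
  have 1: "(\<Sum>j\<in>UNIV. gFc c f j \<Theta>) $ i = gradient (f i) (\<Theta>$i)"
    by (simp add: sum_component gFc_def if_distrib cong: if_cong)
  have 2: "(\<Sum>j\<in>UNIV. (1 - \<alpha> j) *\<^sub>R gpsi c \<gamma> j \<Theta>) $ i = ((1 - \<alpha> (c i)) * \<gamma> i) *\<^sub>R (\<Theta>$i - cbar c \<gamma> (c i) \<Theta>)"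
    by (simp add: sum_component gpsi_def if_distrib cong: if_cong)
  show ?thesis unfolding gtot_def vector_add_component 1 2 by (simp add: gphi_def)
qed

lemma has_derivative_Fobj:
  fixes c :: "'n::finite \<Rightarrow> 'k::finite" and f :: "'n \<Rightarrow> real^'d \<Rightarrow> real"
  assumes diff: "\<forall>i x. f i differentiable (at x)"
    and W: "(\<Sum>i\<in>UNIV. \<alpha> (c i) * \<gamma> i) \<noteq> 0"
    and Wj: "\<And>j. (\<Sum>i\<in>{i. c i = j}. \<gamma> i) \<noteq> 0"
  shows "(Fobj c f \<gamma> \<alpha> has_derivative (\<lambda>h. h \<bullet> gtot c f \<gamma> \<alpha> \<Theta>)) (at \<Theta>)"
proof -
  have "((\<lambda>\<Theta>. (\<Sum>j\<in>UNIV. Fcl c f j \<Theta>) + (\<Sum>j\<in>UNIV. (1 - \<alpha> j) * psi c \<gamma> j \<Theta>) + phi c \<gamma> \<alpha> \<Theta>)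
     has_derivative (\<lambda>h. (\<Sum>j\<in>UNIV. h \<bullet> gFc c f j \<Theta>) + (\<Sum>j\<in>UNIV. (1 - \<alpha> j) * (h \<bullet> gpsi c \<gamma> j \<Theta>)) + h \<bullet> gphi c \<gamma> \<alpha> \<Theta>)) (at \<Theta>)"
    by (intro has_derivative_add has_derivative_sum has_derivative_mult_right
        has_derivative_Fcl[OF diff] has_derivative_psi[where c=c and \<gamma>=\<gamma>, OF Wj] has_derivative_phi[where c=c and \<gamma>=\<gamma> and \<alpha>=\<alpha>, OF W])
  moreover have "(\<lambda>h. (\<Sum>j\<in>UNIV. h \<bullet> gFc c f j \<Theta>) + (\<Sum>j\<in>UNIV. (1 - \<alpha> j) * (h \<bullet> gpsi c \<gamma> j \<Theta>)) + h \<bullet> gphi c \<gamma> \<alpha> \<Theta>)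
      = (\<lambda>h. h \<bullet> gtot c f \<gamma> \<alpha> \<Theta>)"
    by (simp add: gtot_def inner_add_right inner_sum_right)
  ultimately show ?thesis unfolding Fobj_def[abs_def] by simp
qed

lemma gtot_zero:
  fixes c :: "'n::finite \<Rightarrow> 'k::finite" and f :: "'n \<Rightarrow> real^'d \<Rightarrow> real"
  assumes diff: "\<forall>i x. f i differentiable (at x)"
    and W: "(\<Sum>i\<in>UNIV. \<alpha> (c i) * \<gamma> i) \<noteq> 0"
    and Wj: "\<And>j. (\<Sum>i\<in>{i. c i = j}. \<gamma> i) \<noteq> 0"
    and minimizer: "\<forall>\<Theta>. Fobj c f \<gamma> \<alpha> \<Theta>hat \<le> Fobj c f \<gamma> \<alpha> \<Theta>"
  shows "gtot c f \<gamma> \<alpha> \<Theta>hat = 0"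
proof -
  have "(\<lambda>h. h \<bullet> gtot c f \<gamma> \<alpha> \<Theta>hat) = (\<lambda>h. 0)"
    by (rule has_derivative_local_min[OF has_derivative_Fobj[OF diff W Wj]]) (use minimizer in auto)
  hence "gtot c f \<gamma> \<alpha> \<Theta>hat \<bullet> gtot c f \<gamma> \<alpha> \<Theta>hat = 0" by metis
  thus ?thesis by simp
qed

lemma norm_sq_vec: "(norm (x::real^'d^'n))\<^sup>2 = (\<Sum>i\<in>UNIV. (norm (x$i))\<^sup>2)"
  unfolding power2_norm_eq_inner inner_vec_def[of x] ..

lemma norm_gphi: "(norm (gphi c \<gamma> \<alpha> \<Theta>))\<^sup>2 = (\<Sum>i\<in>UNIV. (\<alpha> (c i) * \<gamma> i)\<^sup>2 * (norm (\<Theta>$i - gbar c \<gamma> \<alpha> \<Theta>))\<^sup>2)"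
  unfolding norm_sq_vec gphi_def by (simp add: power_mult_distrib)

lemma norm_gpsi: "(norm (gpsi c \<gamma> j \<Theta>))\<^sup>2 = (\<Sum>i\<in>UNIV. if c i = j then (\<gamma> i)\<^sup>2 * (norm (\<Theta>$i - cbar c \<gamma> j \<Theta>))\<^sup>2 else 0)"
  unfolding norm_sq_vec gpsi_def by (intro sum.cong) (auto simp: power_mult_distrib)

lemma norm_gFc: "(norm (gFc c f j \<Theta>))\<^sup>2 = (\<Sum>i\<in>UNIV. if c i = j then (norm (gradient (f i) (\<Theta>$i)))\<^sup>2 else 0)"
  unfolding norm_sq_vec gFc_def by (intro sum.cong) auto

lemma sum_clusters:
  fixes c :: "'n::finite \<Rightarrow> 'k::finite" and K :: "'k \<Rightarrow> real" and X :: "'n \<Rightarrow> real"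
  shows "(\<Sum>j\<in>UNIV. K j * (\<Sum>i\<in>UNIV. if c i = j then X i else 0)) = (\<Sum>i\<in>UNIV. K (c i) * X i)"
proof -
  have "(\<Sum>j\<in>UNIV. K j * (\<Sum>i\<in>UNIV. if c i = j then X i else 0)) = (\<Sum>j\<in>UNIV. \<Sum>i\<in>UNIV. if c i = j then K j * X i else 0)"
    by (intro sum.cong refl, subst sum_distrib_left, rule sum.cong) auto
  also have "\<dots> = (\<Sum>i\<in>UNIV. \<Sum>j\<in>UNIV. if c i = j then K j * X i else 0)" by (rule sum.swap)
  also have "\<dots> = (\<Sum>i\<in>UNIV. K (c i) * X i)" by (simp add: sum.delta[of UNIV] eq_commute)
  finally show ?thesis .
qed

lemma one_step:
  fixes c :: "'n::finite \<Rightarrow> 'k::finite"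
    and f :: "'n \<Rightarrow> real^'d \<Rightarrow> real"
    and \<gamma> :: "'n \<Rightarrow> real" and \<alpha> :: "'k \<Rightarrow> real"
    and \<mu> L p0 \<eta> :: real and p \<tau> :: "'k \<Rightarrow> real"
    and \<Theta> \<Theta>hat :: "real^'d^'n"
  assumes clusters_nonempty: "surj c"
    and \<gamma>_pos: "\<forall>i. \<gamma> i > 0"
    and \<alpha>_range: "\<forall>j. 0 \<le> \<alpha> j \<and> \<alpha> j \<le> 1"
    and \<alpha>_nonzero: "\<exists>j. \<alpha> j \<noteq> 0"
    and \<mu>L: "0 < \<mu>" "\<mu> \<le> L"
    and f_diff: "\<forall>i x. f i differentiable (at x)"
    and f_sc: "\<forall>i. strongly_convex \<mu> (f i)"
    and f_smooth: "\<forall>i. L_smooth L (f i)"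
    and minimizer: "\<forall>\<Theta>. Fobj c f \<gamma> \<alpha> \<Theta>hat \<le> Fobj c f \<gamma> \<alpha> \<Theta>"
    and p0: "0 < p0" "p0 < 1"
    and pj: "\<forall>j. 0 < p j \<and> p j < 1"
    and \<tau>_def: "\<forall>j. \<tau> j = p0 / (p0 + 2 * (1 - p0) * p j)"
    and \<eta>: "0 < \<eta>" "\<eta> \<le> 1 / (2 * calL c \<gamma> \<alpha> p0 p L)"
  shows "measure_pmf.expectation (xi_pmf p0 p)
           (\<lambda>y. (norm (\<Theta> - \<eta> *\<^sub>R Gor c f \<gamma> \<alpha> p0 p \<tau> \<Theta> y - \<Theta>hat))\<^sup>2)
         \<le> (1 - \<eta> * \<mu>) * (norm (\<Theta> - \<Theta>hat))\<^sup>2 + 2 * \<eta>\<^sup>2 * sigma2 c f \<gamma> \<alpha> p0 p \<Theta>hat"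
proof -
  have Lpos: "L > 0" using \<mu>L by simp
  have Wj_pos: "(\<Sum>i\<in>{i. c i = j}. \<gamma> i) > 0" for j
  proof -
    obtain i0 where "c i0 = j" using clusters_nonempty by (metis surjD)
    hence "{i. c i = j} \<noteq> {}" by auto
    thus ?thesis using \<gamma>_pos by (intro sum_pos) auto
  qed
  hence Wj: "(\<Sum>i\<in>{i. c i = j}. \<gamma> i) \<noteq> 0" for j by (metis less_irrefl)
  have W_pos: "(\<Sum>i\<in>UNIV. \<alpha> (c i) * \<gamma> i) > 0"
  proof -
    obtain j where j: "\<alpha> j \<noteq> 0" using \<alpha>_nonzero by blast
    obtain i0 where i0: "c i0 = j" using clusters_nonempty by (metis surjD)
    have "\<alpha> (c i0) * \<gamma> i0 > 0" using j i0 \<alpha>_range \<gamma>_pos by (metis mult_pos_pos order_le_less)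
    also have "\<dots> \<le> (\<Sum>i\<in>UNIV. \<alpha> (c i) * \<gamma> i)"
      using \<alpha>_range \<gamma>_pos by (intro member_le_sum) (auto intro: mult_nonneg_nonneg less_imp_le)
    finally show ?thesis .
  qed
  hence W: "(\<Sum>i\<in>UNIV. \<alpha> (c i) * \<gamma> i) \<noteq> 0" by simp
  define cL where "cL = calL c \<gamma> \<alpha> p0 p L"
  define D where "D j = p0 + 2 * (1 - p0) * p j" for j
  have Dpos: "D j > 0" for j using p0 pj unfolding D_def by (smt (verit) mult_nonneg_nonneg)
  have c1: "2 / p0 * (\<gamma> i * \<alpha> (c i)) \<le> cL" for i
  proof -
    have "\<gamma> i * \<alpha> (c i) \<le> Max (range (\<lambda>i. \<alpha> (c i) * \<gamma> i))"
      by (intro Max_ge) (auto simp: mult.commute)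
    hence "2 / p0 * (\<gamma> i * \<alpha> (c i)) \<le> 2 / p0 * Max (range (\<lambda>i. \<alpha> (c i) * \<gamma> i))"
      using p0 by (intro mult_left_mono) auto
    thus ?thesis unfolding cL_def calL_def by linarith
  qed
  have c2: "2 / D (c i) * (\<gamma> i * (1 - \<alpha> (c i))) \<le> cL" for i
  proof -
    have "\<gamma> i \<le> Max (\<gamma> ` {i'. c i' = c i})" by (intro Max_ge) auto
    hence "2 * (1 - \<alpha> (c i)) * \<gamma> i / D (c i) \<le> 2 * (1 - \<alpha> (c i)) * Max (\<gamma> ` {i'. c i' = c i}) / D (c i)"
      using Dpos[of "c i"] \<alpha>_range by (intro divide_right_mono mult_left_mono) auto
    also have "\<dots> \<le> Max (range (\<lambda>j. 2 * (1 - \<alpha> j) * Max (\<gamma> ` {i. c i = j}) / (p0 + 2 * (1 - p0) * p j)))"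
      unfolding D_def by (intro Max_ge) auto
    finally show ?thesis unfolding cL_def calL_def by (simp add: mult.commute mult.left_commute)
  qed
  have c3: "L * (1 / ((1 - p0) * (1 - p (c i)))) \<le> cL" for i
  proof -
    have "1 / (1 - p (c i)) \<le> Max (range (\<lambda>j. 1 / (1 - p j)))" by (intro Max_ge) auto
    hence "L / (1 - p0) * (1 / (1 - p (c i))) \<le> L / (1 - p0) * Max (range (\<lambda>j. 1 / (1 - p j)))"
      using Lpos p0 by (intro mult_left_mono) auto
    thus ?thesis unfolding cL_def calL_def by (simp add: mult.commute mult.left_commute)
  qed
  have cLpos: "cL > 0"
    using c3[of undefined] Lpos p0 pj by (smt (verit) divide_pos_pos mult_pos_pos)
  have etaX: "\<eta> * X \<le> 1 / 2" if "X \<le> cL" for X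
  proof -
    have "\<eta> * X \<le> \<eta> * cL" using that \<eta> by (intro mult_left_mono) auto
    also have "\<dots> \<le> 1 / (2 * cL) * cL" using \<eta> cLpos unfolding cL_def by (intro mult_right_mono) auto
    also have "\<dots> = 1 / 2" using cLpos by simp
    finally show ?thesis .
  qed
  define r where "r = \<Theta> - \<Theta>hat"
  define mU where "mU = gbar c \<gamma> \<alpha> \<Theta> - gbar c \<gamma> \<alpha> \<Theta>hat"
  define mV where "mV j = cbar c \<gamma> j \<Theta> - cbar c \<gamma> j \<Theta>hat" for j
  define U where "U i = \<Theta>$i - gbar c \<gamma> \<alpha> \<Theta>" for i
  define U' where "U' i = \<Theta>hat$i - gbar c \<gamma> \<alpha> \<Theta>hat" for i
  define V where "V i = \<Theta>$i - cbar c \<gamma> (c i) \<Theta>" for i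
  define V' where "V' i = \<Theta>hat$i - cbar c \<gamma> (c i) \<Theta>hat" for i
  define G where "G i = gradient (f i) (\<Theta>$i)" for i
  define G' where "G' i = gradient (f i) (\<Theta>hat$i)" for i
  define \<sigma> where "\<sigma> i = 2 / p0 * (\<gamma> i * \<alpha> (c i))\<^sup>2 * (norm (U' i))\<^sup>2
      + 2 / (p0 + 2 * (1 - p0) * p (c i)) * (\<gamma> i * (1 - \<alpha> (c i)))\<^sup>2 * (norm (V' i))\<^sup>2
      + 1 / ((1 - p0) * (1 - p (c i))) * (norm (G' i))\<^sup>2" for i
  have gz: "gtot c f \<gamma> \<alpha> \<Theta>hat = 0" by (rule gtot_zero[OF f_diff W Wj minimizer])
  have zero: "(\<gamma> i * \<alpha> (c i)) *\<^sub>R U' i + (\<gamma> i * (1 - \<alpha> (c i))) *\<^sub>R V' i + G' i = 0" for i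
  proof -
    have "gtot c f \<gamma> \<alpha> \<Theta>hat $ i = 0" using gz by simp
    thus ?thesis unfolding gtot_component U'_def V'_def G'_def by (simp add: algebra_simps)
  qed
  have gphi: "gradient (phi c \<gamma> \<alpha>) \<Theta>hat = gphi c \<gamma> \<alpha> \<Theta>hat"
    by (rule gradient_eqI[OF has_derivative_phi[where c=c and \<gamma>=\<gamma> and \<alpha>=\<alpha>, OF W]])
  have gpsi: "gradient (psi c \<gamma> j) \<Theta>hat = gpsi c \<gamma> j \<Theta>hat" for j
    by (rule gradient_eqI[OF has_derivative_psi[where c=c and \<gamma>=\<gamma>, OF Wj]])
  have gF: "gradient (Fcl c f j) \<Theta>hat = gFc c f j \<Theta>hat" for j
    by (rule gradient_eqI[OF has_derivative_Fcl[OF f_diff]])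
  have npsi: "(norm (gpsi c \<gamma> j \<Theta>hat))\<^sup>2 = (\<Sum>i\<in>UNIV. if c i = j then (\<gamma> i)\<^sup>2 * (norm (V' i))\<^sup>2 else 0)" for j
    unfolding norm_gpsi V'_def by (intro sum.cong) auto
  have nF: "(norm (gFc c f j \<Theta>hat))\<^sup>2 = (\<Sum>i\<in>UNIV. if c i = j then (norm (G' i))\<^sup>2 else 0)" for j
    unfolding norm_gFc G'_def by (intro sum.cong) auto
  have sig: "sigma2 c f \<gamma> \<alpha> p0 p \<Theta>hat = (\<Sum>i\<in>UNIV. \<sigma> i)"
  proof -
    have "sigma2 c f \<gamma> \<alpha> p0 p \<Theta>hat = 2 / p0 * (\<Sum>i\<in>UNIV. (\<alpha> (c i) * \<gamma> i)\<^sup>2 * (norm (U' i))\<^sup>2)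
      + (\<Sum>i\<in>UNIV. 2 * (1 - \<alpha> (c i))\<^sup>2 / (p0 + 2 * (1 - p0) * p (c i)) * ((\<gamma> i)\<^sup>2 * (norm (V' i))\<^sup>2))
      + 1 / (1 - p0) * (\<Sum>i\<in>UNIV. 1 / (1 - p (c i)) * (norm (G' i))\<^sup>2)"
      unfolding sigma2_def gphi gpsi gF norm_gphi npsi nF sum_clusters U'_def ..
    also have "\<dots> = (\<Sum>i\<in>UNIV. \<sigma> i)"
      unfolding \<sigma>_def sum_distrib_left sum.distrib[symmetric]
      by (intro sum.cong refl) (simp add: power_mult_distrib mult_ac)
    finally show ?thesis .
  qed
  define A where "A i = (\<gamma> i * \<alpha> (c i) / p0) *\<^sub>R U i + (\<gamma> i * \<tau> (c i) * (1 - \<alpha> (c i)) / p0) *\<^sub>R V i" for i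
  define B where "B i = (\<gamma> i * (1 - \<tau> (c i)) * (1 - \<alpha> (c i)) / ((1 - p0) * p (c i))) *\<^sub>R V i" for i
  define C where "C i = (1 / ((1 - p0) * (1 - p (c i)))) *\<^sub>R G i" for i
  have Gi: "Gor c f \<gamma> \<alpha> p0 p \<tau> \<Theta> y $ i = (if fst y then A i else if snd y (c i) then B i else C i)" for y i
    by (simp add: Gor_def Let_def A_def B_def C_def U_def V_def G_def)
  define Ec where "Ec i = measure_pmf.expectation (xi_pmf p0 p)
      (\<lambda>y. (norm (r$i - \<eta> *\<^sub>R (if fst y then A i else if snd y (c i) then B i else C i)))\<^sup>2)" for i
  have finxi: "finite (set_pmf (xi_pmf p0 p))" by (rule finite_subset[OF subset_UNIV]) simp
  have E1: "measure_pmf.expectation (xi_pmf p0 p)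
           (\<lambda>y. (norm (\<Theta> - \<eta> *\<^sub>R Gor c f \<gamma> \<alpha> p0 p \<tau> \<Theta> y - \<Theta>hat))\<^sup>2) = (\<Sum>i\<in>UNIV. Ec i)"
  proof -
    have "(\<lambda>y. (norm (\<Theta> - \<eta> *\<^sub>R Gor c f \<gamma> \<alpha> p0 p \<tau> \<Theta> y - \<Theta>hat))\<^sup>2) =
      (\<lambda>y. \<Sum>i\<in>UNIV. (norm (r$i - \<eta> *\<^sub>R (if fst y then A i else if snd y (c i) then B i else C i)))\<^sup>2)"
    proof
      fix y
      show "(norm (\<Theta> - \<eta> *\<^sub>R Gor c f \<gamma> \<alpha> p0 p \<tau> \<Theta> y - \<Theta>hat))\<^sup>2 =
        (\<Sum>i\<in>UNIV. (norm (r$i - \<eta> *\<^sub>R (if fst y then A i else if snd y (c i) then B i else C i)))\<^sup>2)"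
        unfolding norm_sq_vec
      proof (intro sum.cong refl)
        fix i
        have "(\<Theta> - \<eta> *\<^sub>R Gor c f \<gamma> \<alpha> p0 p \<tau> \<Theta> y - \<Theta>hat) $ i
           = r$i - \<eta> *\<^sub>R (if fst y then A i else if snd y (c i) then B i else C i)"
          unfolding Gi[symmetric] r_def by simp
        thus "(norm ((\<Theta> - \<eta> *\<^sub>R Gor c f \<gamma> \<alpha> p0 p \<tau> \<Theta> y - \<Theta>hat) $ i))\<^sup>2 =
          (norm (r$i - \<eta> *\<^sub>R (if fst y then A i else if snd y (c i) then B i else C i)))\<^sup>2" by simp
      qed
    qed
    thus ?thesis unfolding Ec_def
      by (simp add: integral_sum integrable_measure_pmf_finite[OF finxi])
  qed
  have mix: "p0 * (P * x + (1 - P) * x) + (1 - p0) * (P * y + (1 - P) * z)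
      = p0 * x + (1 - p0) * P * y + (1 - p0) * (1 - P) * z" for P x y z :: real
    by (simp add: algebra_simps)
  have Ei: "Ec i = p0 * (norm (r$i - \<eta> *\<^sub>R A i))\<^sup>2 + (1 - p0) * p (c i) * (norm (r$i - \<eta> *\<^sub>R B i))\<^sup>2
      + (1 - p0) * (1 - p (c i)) * (norm (r$i - \<eta> *\<^sub>R C i))\<^sup>2" for i
  proof -
    have "Ec i = p0 * (p (c i) * (norm (r$i - \<eta> *\<^sub>R A i))\<^sup>2 + (1 - p (c i)) * (norm (r$i - \<eta> *\<^sub>R A i))\<^sup>2)
      + (1 - p0) * (p (c i) * (norm (r$i - \<eta> *\<^sub>R B i))\<^sup>2 + (1 - p (c i)) * (norm (r$i - \<eta> *\<^sub>R C i))\<^sup>2)"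
      unfolding Ec_def
      using xi_expect[of p0 p "c i" "\<lambda>a b. (norm (r$i - \<eta> *\<^sub>R (if a then A i else if b then B i else C i)))\<^sup>2"]
        p0 pj by (simp add: less_imp_le)
    thus ?thesis unfolding mix .
  qed
  have comp: "Ec i \<le> (1 - \<eta> * \<mu>) * (norm (r$i))\<^sup>2
      - 2 * \<eta> * ((\<gamma> i * \<alpha> (c i)) * ((U i - U' i) \<bullet> mU) + (\<gamma> i * (1 - \<alpha> (c i))) * ((V i - V' i) \<bullet> mV (c i)))
      + 2 * \<eta>\<^sup>2 * \<sigma> i" for i
  proof -
    have P: "0 < p (c i)" "p (c i) < 1" using pj by auto
    have t: "\<tau> (c i) = p0 / (p0 + 2 * (1 - p0) * p (c i))" using \<tau>_def by auto
    have B1: "p0 * (norm (r$i - \<eta> *\<^sub>R A i))\<^sup>2 + (1 - p0) * p (c i) * (norm (r$i - \<eta> *\<^sub>R B i))\<^sup>2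
      + (1 - p0) * (1 - p (c i)) * (norm (r$i - \<eta> *\<^sub>R C i))\<^sup>2
      \<le> (norm (r$i))\<^sup>2 - 2 * \<eta> * ((\<gamma> i * \<alpha> (c i)) * ((U i - U' i) \<bullet> r$i) + (\<gamma> i * (1 - \<alpha> (c i))) * ((V i - V' i) \<bullet> r$i) + (G i - G' i) \<bullet> r$i)
        + 2 * \<eta>\<^sup>2 * (2 / p0 * (\<gamma> i * \<alpha> (c i))\<^sup>2 * (norm (U i - U' i))\<^sup>2
              + 2 / (p0 + 2 * (1 - p0) * p (c i)) * (\<gamma> i * (1 - \<alpha> (c i)))\<^sup>2 * (norm (V i - V' i))\<^sup>2
              + 1 / ((1 - p0) * (1 - p (c i))) * (norm (G i - G' i))\<^sup>2)
        + 2 * \<eta>\<^sup>2 * \<sigma> i"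
      unfolding \<sigma>_def
      by (rule comp_bound[OF p0 P t zero A_def refl B_def refl C_def refl])
    have dU: "U i - U' i = r$i - mU" by (simp add: U_def U'_def r_def mU_def algebra_simps)
    have dV: "V i - V' i = r$i - mV (c i)" by (simp add: V_def V'_def r_def mV_def algebra_simps)
    have pos: "0 \<le> \<gamma> i * \<alpha> (c i)" "0 \<le> \<gamma> i * (1 - \<alpha> (c i))" "0 \<le> \<eta>" "0 < L"
    proof -
      have "0 \<le> \<gamma> i" "0 \<le> \<alpha> (c i)" "0 \<le> 1 - \<alpha> (c i)" using \<gamma>_pos \<alpha>_range
        by (auto simp: less_imp_le)
      thus "0 \<le> \<gamma> i * \<alpha> (c i)" "0 \<le> \<gamma> i * (1 - \<alpha> (c i))" "0 \<le> \<eta>" "0 < L"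
        using \<eta> Lpos by auto
    qed
    have cw1: "\<eta> * (2 / p0) * (\<gamma> i * \<alpha> (c i)) \<le> 1"
      using etaX[OF c1[of i]] unfolding mult.assoc by linarith
    have cw2: "\<eta> * (2 / (p0 + 2 * (1 - p0) * p (c i))) * (\<gamma> i * (1 - \<alpha> (c i))) \<le> 1"
      using etaX[OF c2[of i]] unfolding D_def mult.assoc by linarith
    have cw3: "2 * \<eta> * (1 / ((1 - p0) * (1 - p (c i)))) * L \<le> 1"
    proof -
      have "2 * \<eta> * (1 / ((1 - p0) * (1 - p (c i)))) * L = 2 * (\<eta> * (L * (1 / ((1 - p0) * (1 - p (c i))))))"
        by (simp only: mult_ac)
      thus ?thesis using etaX[OF c3[of i]] by linarith
    qed
    have ccf: "(G i - G' i) \<bullet> r$i \<ge> \<mu> / 2 * (norm (r$i))\<^sup>2 + (norm (G i - G' i))\<^sup>2 / (2 * L)"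
    proof -
      have d: "\<forall>z. f i differentiable (at z)" using f_diff by auto
      have "r$i = \<Theta>$i - \<Theta>hat$i" by (simp add: r_def)
      thus ?thesis unfolding G_def G'_def
        using coco[OF d _ _ _ Lpos, of \<mu> "\<Theta>$i" "\<Theta>hat$i"] f_sc f_smooth \<mu>L by auto
    qed
    have "Ec i \<le> (1 - \<eta> * \<mu>) * (norm (r$i))\<^sup>2
      - 2 * \<eta> * ((\<gamma> i * \<alpha> (c i)) * ((U i - U' i) \<bullet> mU) + (\<gamma> i * (1 - \<alpha> (c i))) * ((V i - V' i) \<bullet> mV (c i)))
      + 2 * \<eta>\<^sup>2 * \<sigma> i"
      by (rule comp_bound2[OF B1[folded Ei] dU dV pos cw1 cw2 cw3 ccf])
    thus ?thesis .
  qed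
  have Z1: "(\<Sum>i\<in>UNIV. (\<gamma> i * \<alpha> (c i)) * ((U i - U' i) \<bullet> mU)) = 0"
  proof -
    have s1: "(\<Sum>i\<in>UNIV. (\<alpha> (c i) * \<gamma> i) *\<^sub>R U i) = 0"
      unfolding U_def by (rule sum_gbar_zero[where c=c and \<gamma>=\<gamma> and \<alpha>=\<alpha>, OF W])
    have s2: "(\<Sum>i\<in>UNIV. (\<alpha> (c i) * \<gamma> i) *\<^sub>R U' i) = 0"
      unfolding U'_def by (rule sum_gbar_zero[where c=c and \<gamma>=\<gamma> and \<alpha>=\<alpha>, OF W])
    have "(\<Sum>i\<in>UNIV. (\<alpha> (c i) * \<gamma> i) *\<^sub>R (U i - U' i)) = 0"
      using s1 s2 by (simp add: scaleR_diff_right sum_subtractf)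
    hence "(\<Sum>i\<in>UNIV. (\<alpha> (c i) * \<gamma> i) *\<^sub>R (U i - U' i)) \<bullet> mU = 0" by simp
    thus ?thesis by (simp add: inner_sum_left mult.commute)
  qed
  have Z2: "(\<Sum>i\<in>UNIV. (\<gamma> i * (1 - \<alpha> (c i))) * ((V i - V' i) \<bullet> mV (c i))) = 0"
  proof -
    have "(\<Sum>i\<in>UNIV. (\<gamma> i * (1 - \<alpha> (c i))) * ((V i - V' i) \<bullet> mV (c i)))
      = (\<Sum>j\<in>UNIV. \<Sum>i\<in>{x\<in>UNIV. c x = j}. (\<gamma> i * (1 - \<alpha> (c i))) * ((V i - V' i) \<bullet> mV (c i)))"
      by (rule sum.group[symmetric]) auto
    also have "\<dots> = (\<Sum>j\<in>(UNIV::'k set). 0)"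
    proof (intro sum.cong refl)
      fix j
      have s1: "(\<Sum>i\<in>{i. c i = j}. \<gamma> i *\<^sub>R (\<Theta>$i - cbar c \<gamma> j \<Theta>)) = 0"
        by (rule sum_cbar_zero[where c=c and \<gamma>=\<gamma> and j=j, OF Wj])
      have s2: "(\<Sum>i\<in>{i. c i = j}. \<gamma> i *\<^sub>R (\<Theta>hat$i - cbar c \<gamma> j \<Theta>hat)) = 0"
        by (rule sum_cbar_zero[where c=c and \<gamma>=\<gamma> and j=j, OF Wj])
      have "(\<Sum>i\<in>{i. c i = j}. \<gamma> i *\<^sub>R (V i - V' i)) =
        (\<Sum>i\<in>{i. c i = j}. \<gamma> i *\<^sub>R (\<Theta>$i - cbar c \<gamma> j \<Theta>) - \<gamma> i *\<^sub>R (\<Theta>hat$i - cbar c \<gamma> j \<Theta>hat))"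
        by (intro sum.cong refl) (auto simp: V_def V'_def scaleR_diff_right)
      also have "\<dots> = 0" using s1 s2 by (simp add: sum_subtractf)
      finally have "(1 - \<alpha> j) * ((\<Sum>i\<in>{i. c i = j}. \<gamma> i *\<^sub>R (V i - V' i)) \<bullet> mV j) = 0" by simp
      moreover have "(1 - \<alpha> j) * ((\<Sum>i\<in>{i. c i = j}. \<gamma> i *\<^sub>R (V i - V' i)) \<bullet> mV j)
        = (\<Sum>i\<in>{x\<in>UNIV. c x = j}. (\<gamma> i * (1 - \<alpha> (c i))) * ((V i - V' i) \<bullet> mV (c i)))"
        by (simp add: inner_sum_left sum_distrib_left mult_ac)
      ultimately show "(\<Sum>i\<in>{x\<in>UNIV. c x = j}. (\<gamma> i * (1 - \<alpha> (c i))) * ((V i - V' i) \<bullet> mV (c i))) = 0"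
        by simp
    qed
    finally show ?thesis by simp
  qed
  have "(\<Sum>i\<in>UNIV. Ec i) \<le> (\<Sum>i\<in>UNIV. (1 - \<eta> * \<mu>) * (norm (r$i))\<^sup>2
      - 2 * \<eta> * ((\<gamma> i * \<alpha> (c i)) * ((U i - U' i) \<bullet> mU) + (\<gamma> i * (1 - \<alpha> (c i))) * ((V i - V' i) \<bullet> mV (c i)))
      + 2 * \<eta>\<^sup>2 * \<sigma> i)"
    by (rule sum_mono) (rule comp)
  also have "\<dots> = (1 - \<eta> * \<mu>) * (\<Sum>i\<in>UNIV. (norm (r$i))\<^sup>2)
      - 2 * \<eta> * ((\<Sum>i\<in>UNIV. (\<gamma> i * \<alpha> (c i)) * ((U i - U' i) \<bullet> mU))
                  + (\<Sum>i\<in>UNIV. (\<gamma> i * (1 - \<alpha> (c i))) * ((V i - V' i) \<bullet> mV (c i))))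
      + 2 * \<eta>\<^sup>2 * (\<Sum>i\<in>UNIV. \<sigma> i)"
    by (simp only: sum.distrib sum_subtractf sum_distrib_left[symmetric])
  also have "\<dots> = (1 - \<eta> * \<mu>) * (norm (\<Theta> - \<Theta>hat))\<^sup>2 + 2 * \<eta>\<^sup>2 * sigma2 c f \<gamma> \<alpha> p0 p \<Theta>hat"
    unfolding Z1 Z2 sig norm_sq_vec[of "\<Theta> - \<Theta>hat"] r_def by simp
  finally show ?thesis unfolding E1 .
qed

theorem mainTheorem8:
  fixes c :: "'n::finite \<Rightarrow> 'k::finite"
    and f :: "'n \<Rightarrow> real^'d \<Rightarrow> real"
    and \<gamma> :: "'n \<Rightarrow> real" and \<alpha> :: "'k \<Rightarrow> real"
    and \<mu> L p0 \<eta> :: real and p \<tau> :: "'k \<Rightarrow> real"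
    and \<Theta>0 \<Theta>hat :: "real^'d^'n"
  assumes clusters_nonempty: "surj c"
    and \<gamma>_pos: "\<forall>i. \<gamma> i > 0"
    and \<alpha>_range: "\<forall>j. 0 \<le> \<alpha> j \<and> \<alpha> j \<le> 1"
    and \<alpha>_nonzero: "\<exists>j. \<alpha> j \<noteq> 0"
    and \<mu>L: "0 < \<mu>" "\<mu> \<le> L"
    and f_diff: "\<forall>i x. f i differentiable (at x)"
    and f_sc: "\<forall>i. strongly_convex \<mu> (f i)"
    and f_smooth: "\<forall>i. L_smooth L (f i)"
    and minimizer: "\<forall>\<Theta>. Fobj c f \<gamma> \<alpha> \<Theta>hat \<le> Fobj c f \<gamma> \<alpha> \<Theta>"
    and p0: "0 < p0" "p0 < 1"
    and pj: "\<forall>j. 0 < p j \<and> p j < 1"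
    and \<tau>_def: "\<forall>j. \<tau> j = p0 / (p0 + 2 * (1 - p0) * p j)"
    and \<eta>: "0 < \<eta>" "\<eta> \<le> 1 / (2 * calL c \<gamma> \<alpha> p0 p L)"
  shows "\<forall>t::nat.
    measure_pmf.expectation (Pi_pmf {..<t} (False, \<lambda>_. False) (\<lambda>_. xi_pmf p0 p))
      (\<lambda>xis. (norm (iter (Gor c f \<gamma> \<alpha> p0 p \<tau>) \<eta> \<Theta>0 xis t - \<Theta>hat))\<^sup>2)
    \<le> (1 - \<eta> * \<mu>) ^ t * (norm (\<Theta>0 - \<Theta>hat))\<^sup>2 + 2 * \<eta> * sigma2 c f \<gamma> \<alpha> p0 p \<Theta>hat / \<mu>"
proof
  fix t :: nat
  define s where "s = sigma2 c f \<gamma> \<alpha> p0 p \<Theta>hat"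
  have Lpos: "L > 0" using \<mu>L by simp
  have finxi: "finite (set_pmf (xi_pmf p0 p))" by (rule finite_subset[OF subset_UNIV]) simp
  define cL where "cL = calL c \<gamma> \<alpha> p0 p L"
  obtain j0 :: 'k where True by simp
  have "L \<le> L / (1 - p0) * (1 / (1 - p j0))"
  proof -
    have pj0: "0 < p j0" "p j0 < 1" using pj by auto
    have a: "1 \<le> 1 / (1 - p0)" "1 \<le> 1 / (1 - p j0)" using p0 pj0 by (auto simp: field_simps)
    have "L * 1 \<le> L * (1 / (1 - p0))" using a Lpos by (intro mult_left_mono) auto
    hence "L * 1 \<le> L / (1 - p0) * 1" by simp
    also have "\<dots> \<le> L / (1 - p0) * (1 / (1 - p j0))" using a Lpos p0 by (intro mult_left_mono) auto
    finally show ?thesis by simp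
  qed
  also have "\<dots> \<le> L / (1 - p0) * Max (range (\<lambda>j. 1 / (1 - p j)))"
    using Lpos p0 by (intro mult_left_mono Max_ge) auto
  also have "\<dots> \<le> cL" unfolding cL_def calL_def by linarith
  finally have LcL: "L \<le> cL" .
  have cLpos: "cL > 0" using LcL Lpos by simp
  have "\<eta> * \<mu> \<le> \<eta> * cL" using \<mu>L LcL \<eta> by (intro mult_left_mono) auto
  also have "\<dots> \<le> 1 / (2 * cL) * cL" using \<eta> cLpos unfolding cL_def by (intro mult_right_mono) auto
  also have "\<dots> = 1 / 2" using cLpos by simp
  finally have em: "\<eta> * \<mu> \<le> 1 / 2" .
  have s0: "s \<ge> 0"
  proof -
    have D: "p0 + 2 * (1 - p0) * p j > 0" for j using p0 pj by (smt (verit) mult_nonneg_nonneg)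
    have "0 \<le> 2 / p0 * (norm (gradient (phi c \<gamma> \<alpha>) \<Theta>hat))\<^sup>2" using p0 by simp
    moreover have "0 \<le> (\<Sum>j\<in>UNIV. 2 * (1 - \<alpha> j)\<^sup>2 / (p0 + 2 * (1 - p0) * p j) * (norm (gradient (psi c \<gamma> j) \<Theta>hat))\<^sup>2)"
      using D by (intro sum_nonneg mult_nonneg_nonneg divide_nonneg_pos) (auto simp: less_imp_le)
    moreover have "0 \<le> 1 / (1 - p0) * (\<Sum>j\<in>UNIV. 1 / (1 - p j) * (norm (gradient (Fcl c f j) \<Theta>hat))\<^sup>2)"
      using p0 pj by (intro sum_nonneg mult_nonneg_nonneg) (auto simp: less_imp_le)
    ultimately show ?thesis unfolding s_def sigma2_def by linarith
  qed
  have step: "measure_pmf.expectation (xi_pmf p0 p)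
           (\<lambda>y. (norm (\<Theta> - \<eta> *\<^sub>R Gor c f \<gamma> \<alpha> p0 p \<tau> \<Theta> y - \<Theta>hat))\<^sup>2)
         \<le> (1 - \<eta> * \<mu>) * (norm (\<Theta> - \<Theta>hat))\<^sup>2 + 2 * \<eta>\<^sup>2 * s" for \<Theta>
    unfolding s_def
    by (rule one_step[OF clusters_nonempty \<gamma>_pos \<alpha>_range \<alpha>_nonzero \<mu>L f_diff f_sc f_smooth minimizer p0 pj \<tau>_def \<eta>])
  have K: "(1 - \<eta> * \<mu>) * (2 * \<eta> * s / \<mu>) + 2 * \<eta>\<^sup>2 * s \<le> 2 * \<eta> * s / \<mu>"
    using \<mu>L by (simp add: field_simps power2_eq_square)
  have K0: "0 \<le> 2 * \<eta> * s / \<mu>" using s0 \<eta> \<mu>L by simp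
  show "measure_pmf.expectation (Pi_pmf {..<t} (False, \<lambda>_. False) (\<lambda>_. xi_pmf p0 p))
      (\<lambda>xis. (norm (iter (Gor c f \<gamma> \<alpha> p0 p \<tau>) \<eta> \<Theta>0 xis t - \<Theta>hat))\<^sup>2)
    \<le> (1 - \<eta> * \<mu>) ^ t * (norm (\<Theta>0 - \<Theta>hat))\<^sup>2 + 2 * \<eta> * sigma2 c f \<gamma> \<alpha> p0 p \<Theta>hat / \<mu>"
    unfolding s_def[symmetric]
    by (rule iter_bound[OF finxi step _ K K0]) (use em in simp)
qed

end
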